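(* Let $X$ be a real Banach space with a basis $(e_k)_{k=1}^N$, where $1\le N\le\infty$, with biorthogonal functionals $(e_k^* )$. Suppose $1\le m_1<m_2<\dots<m_n<N$ and that for every $x\in[e_j]_{j=1}^{m_1}$ the sequence $\{x,e_{m_1+1},e_{m_1+2},\dots\}$ is skipped $\lambda$-unconditional. Let $x^*,y^*\in X^*\setminus\{0\}$ satisfy $x^*\in[e_k^*]_{k=1}^{m_1}$ and $y^*(e_j)=0$ for $1\le j\le m_n$. Then $\{x^*,e^*_{m_2},\dots,e^*_{m_{n-1}},y^*\}$ is a dual skipped $\lambda$-unconditional basis of its linear span. In particular this conclusion holds whenever $(e_k)_{k=1}^N$ itself is skipped $\lambda$-unconditional.
   Context: A basic sequence $(e_k)_{k=1}^N$ ($1\le N\le\infty$) is skipped $\lambda$-unconditional if whenever $0=m_0<m_1<\dots<m_n<\infty$ with $m_j-m_{j-1}\ge2$ for $1\le j\le n$, and $y_j\in[e_i]_{i=m_{j-1}+1}^{m_j-1}$ (spans taken only over indices $i\le N$), then $\|\sum_{j=1}^n\epsilon_jy_j\|\le\lambda\|\sum_{j=1}^ny_j\|$ for all signs $\epsilon_j=\pm1$. A basis $(f_k)_{k=1}^M$ of a finite-dimensional space $F$ is dual skipped $\lambda$-unconditional if its dual (biorthogonal) basis $(f_k^* )_{k=1}^M$ in $F^*$ is skipped $\lambda$-unconditional. $[\,\cdot\,]$ denotes closed linear span. *)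

theory Defs
  imports "HOL-Analysis.Analysis" "HOL-Library.Extended_Nat"
begin

text \<open>Sequences are indexed from 1; the length L (or N) is an extended natural
  (\<infinity> allowed).  Index i belongs to the sequence iff 1 \<le> i and enat i \<le> L.\<close>

definition has_expansion :: "enat \<Rightarrow> (nat \<Rightarrow> 'a::real_normed_vector) \<Rightarrow> (nat \<Rightarrow> real) \<Rightarrow> 'a \<Rightarrow> bool" where
  "has_expansion N e a x \<longleftrightarrow>
     (\<lambda>n. \<Sum>k\<in>{k. 1 \<le> k \<and> k \<le> n \<and> enat k \<le> N}. a k *\<^sub>R e k) \<longlonglongrightarrow> x"

definition schauder_basis :: "enat \<Rightarrow> (nat \<Rightarrow> 'a::real_normed_vector) \<Rightarrow> bool" where
  "schauder_basis N e \<longleftrightarrow> 1 \<le> N \<and>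
     (\<forall>x. \<exists>a. has_expansion N e a x) \<and>
     (\<forall>x a b. has_expansion N e a x \<and> has_expansion N e b x \<longrightarrow>
        (\<forall>k. 1 \<le> k \<and> enat k \<le> N \<longrightarrow> a k = b k))"

definition skipped_unconditional :: "real \<Rightarrow> (nat \<Rightarrow> 'a::real_normed_vector) \<Rightarrow> enat \<Rightarrow> bool" where
  "skipped_unconditional lam f L \<longleftrightarrow>
     (\<forall>(n::nat) (p::nat \<Rightarrow> nat) (y::nat \<Rightarrow> 'a) (eps::nat \<Rightarrow> real).
        p 0 = 0 \<and> (\<forall>j\<in>{1..n}. p (j - 1) + 2 \<le> p j) \<and>
        (\<forall>j\<in>{1..n}. y j \<in> span (f ` {i. p (j - 1) < i \<and> i < p j \<and> enat i \<le> L})) \<and>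
        (\<forall>j\<in>{1..n}. eps j = 1 \<or> eps j = -1)
        \<longrightarrow> norm (\<Sum>j=1..n. eps j *\<^sub>R y j) \<le> lam * norm (\<Sum>j=1..n. y j))"

text \<open>Dual (biorthogonal) functionals of a finite basis fs of F = span (set fs), 1-indexed:
  f_k^*(g) is the k-th coordinate of g with respect to fs.\<close>
definition dual_functional :: "'a::real_vector list \<Rightarrow> nat \<Rightarrow> 'a \<Rightarrow> real" where
  "dual_functional fs k g = real_vector.representation (set fs) g (fs ! (k - 1))"

definition dual_norm :: "'a::real_normed_vector set \<Rightarrow> ('a \<Rightarrow> real) \<Rightarrow> real" where
  "dual_norm F phi = Sup {\<bar>phi g\<bar> | g. g \<in> F \<and> norm g \<le> 1}"

text \<open>Elements of the span of {f_i^* : i in a block} are written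
  out as linear combinations with coefficients a.\<close>
definition dual_skipped_unconditional_basis :: "real \<Rightarrow> 'a::real_normed_vector list \<Rightarrow> bool" where
  "dual_skipped_unconditional_basis lam fs \<longleftrightarrow>
     distinct fs \<and> \<not> real_vector.dependent (set fs) \<and>
     (\<forall>(n::nat) (p::nat \<Rightarrow> nat) (a::nat \<Rightarrow> real) (eps::nat \<Rightarrow> real).
        p 0 = 0 \<and> (\<forall>j\<in>{1..n}. p (j - 1) + 2 \<le> p j) \<and>
        (\<forall>j\<in>{1..n}. eps j = 1 \<or> eps j = -1)
        \<longrightarrow> (let y = (\<lambda>j g. \<Sum>i\<in>{i. p (j - 1) < i \<and> i < p j \<and> i \<le> length fs}.
                              a i * dual_functional fs i g)
             in dual_norm (span (set fs)) (\<lambda>g. \<Sum>j=1..n. eps j * y j g)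
                \<le> lam * dual_norm (span (set fs)) (\<lambda>g. \<Sum>j=1..n. y j g)))"

end

theory Submission
  imports Defs
begin


lemma G1:
  fixes fs :: "('a::real_normed_vector \<Rightarrow>\<^sub>L real) list" and u :: "nat \<Rightarrow> 'a"
  assumes bo: "\<forall>i\<in>{1..length fs}. \<forall>j\<in>{1..length fs}. blinfun_apply (fs!(i-1)) (u j) = (if i = j then 1 else 0)"
  shows "distinct fs" and "\<not> real_vector.dependent (set fs)"
    and "\<And>g i. g \<in> span (set fs) \<Longrightarrow> i \<in> {1..length fs} \<Longrightarrow> dual_functional fs i g = blinfun_apply g (u i)"
    and "\<And>g. g \<in> span (set fs) \<Longrightarrow> g = (\<Sum>i=1..length fs. blinfun_apply g (u i) *\<^sub>R fs!(i-1))"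
proof -
  show dist: "distinct fs"
  proof (subst distinct_conv_nth, intro allI impI)
    fix i j assume "i < length fs" "j < length fs" "i \<noteq> j"
    then show "fs ! i \<noteq> fs ! j"
      using bo[rule_format, of "Suc i" "Suc i"] bo[rule_format, of "Suc j" "Suc i"] by auto
  qed
  have val: "\<And>b i. b \<in> set fs \<Longrightarrow> i \<in> {1..length fs} \<Longrightarrow> blinfun_apply b (u i) = (if b = fs!(i-1) then 1 else 0)"
  proof -
    fix b i assume b: "b \<in> set fs" and i: "i \<in> {1..length fs}"
    then obtain k where k: "k < length fs" "b = fs ! k" by (auto simp: in_set_conv_nth)
    have "(b = fs!(i-1)) = (k = i - 1)" using k i dist by (auto simp: nth_eq_iff_index_eq)
    then show "blinfun_apply b (u i) = (if b = fs!(i-1) then 1 else 0)"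
      using bo[rule_format, of "Suc k" i] k i by auto
  qed
  have sumev: "\<And>c i. i \<in> {1..length fs} \<Longrightarrow> blinfun_apply (\<Sum>b\<in>set fs. c b *\<^sub>R b) (u i) = c (fs!(i-1))"
  proof -
    fix c i assume i: "i \<in> {1..length fs}"
    have "blinfun_apply (\<Sum>b\<in>set fs. c b *\<^sub>R b) (u i) = (\<Sum>b\<in>set fs. c b * blinfun_apply b (u i))"
      by (simp add: blinfun.sum_left blinfun.scaleR_left)
    also have "\<dots> = (\<Sum>b\<in>set fs. if b = fs!(i-1) then c b else 0)"
      by (rule sum.cong) (simp_all add: val[OF _ i])
    also have "\<dots> = c (fs!(i-1))" using i by (auto simp: sum.delta)
    finally show "blinfun_apply (\<Sum>b\<in>set fs. c b *\<^sub>R b) (u i) = c (fs!(i-1))" .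
  qed
  show ind: "\<not> real_vector.dependent (set fs)"
  proof (rule real_vector.independent_if_scalars_zero)
    fix c x assume s: "(\<Sum>x\<in>set fs. c x *\<^sub>R x) = 0" and x: "x \<in> set fs"
    then obtain k where k: "k < length fs" "x = fs ! k" by (auto simp: in_set_conv_nth)
    have "c (fs!(Suc k - 1)) = 0" using sumev[of "Suc k" c] s k by auto
    then show "c x = 0" using k by simp
  qed simp
  have rep: "blinfun_apply g (u i) = real_vector.representation (set fs) g (fs!(i-1))"
    if g: "g \<in> span (set fs)" and i: "i \<in> {1..length fs}" for g i
  proof -
    have "(\<Sum>b\<in>set fs. real_vector.representation (set fs) g b *\<^sub>R b) = g"
      by (rule real_vector.sum_representation_eq[OF ind g]) auto
    then show ?thesis
      using sumev[OF i, of "real_vector.representation (set fs) g"] by simp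
  qed
  show "dual_functional fs i g = blinfun_apply g (u i)" if g: "g \<in> span (set fs)" and i: "i \<in> {1..length fs}" for g i
    using rep[OF g i] by (simp add: dual_functional_def)
  show "g = (\<Sum>i=1..length fs. blinfun_apply g (u i) *\<^sub>R fs!(i-1))" if g: "g \<in> span (set fs)" for g
  proof -
    have setfs: "set fs = (\<lambda>i. fs!(i-1)) ` {1..length fs}"
    proof (rule set_eqI)
      fix b
      show "b \<in> set fs \<longleftrightarrow> b \<in> (\<lambda>i. fs!(i-1)) ` {1..length fs}"
      proof
        assume "b \<in> set fs"
        then obtain k where k: "k < length fs" "b = fs ! k" by (auto simp: in_set_conv_nth)
        then show "b \<in> (\<lambda>i. fs!(i-1)) ` {1..length fs}" by (intro image_eqI[of _ _ "Suc k"]) auto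
      next
        assume "b \<in> (\<lambda>i. fs!(i-1)) ` {1..length fs}"
        then obtain i where "i \<in> {1..length fs}" "b = fs!(i-1)" by auto
        then show "b \<in> set fs" by auto
      qed
    qed
    have inj: "inj_on (\<lambda>i. fs!(i-1)) {1..length fs}"
      by (rule inj_onI) (use dist in \<open>auto simp: nth_eq_iff_index_eq\<close>)
    have "g = (\<Sum>b\<in>set fs. real_vector.representation (set fs) g b *\<^sub>R b)"
      by (rule real_vector.sum_representation_eq[OF ind g, symmetric]) auto
    also have "\<dots> = (\<Sum>i=1..length fs. real_vector.representation (set fs) g (fs!(i-1)) *\<^sub>R fs!(i-1))"
      unfolding setfs by (rule sum.reindex[OF inj, unfolded comp_def])
    also have "\<dots> = (\<Sum>i=1..length fs. blinfun_apply g (u i) *\<^sub>R fs!(i-1))"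
      by (rule sum.cong) (simp_all add: rep[OF g])
    finally show ?thesis .
  qed
qed




lemma gaps_mono:
  fixes p :: "nat \<Rightarrow> nat" and n j j' :: nat
  assumes "\<forall>j\<in>{1..n}. p (j-1) + 2 \<le> (p j::nat)" "j \<le> j'" "j' \<le> n"
  shows "p j + 2 * (j' - j) \<le> p j'"
  using assms(2,3)
proof (induction j' rule: dec_induct)
  case base then show ?case by simp
next
  case (step k)
  have "p k + 2 \<le> p (Suc k)" using assms(1) step by (metis One_nat_def Suc_le_mono atLeastAtMost_iff diff_Suc_1 le0 le_SucI)
  then show ?case using step by (simp add: Suc_diff_le)
qed

lemma gaps_mono':
  fixes p :: "nat \<Rightarrow> nat" and n j j' :: nat
  assumes "\<forall>j\<in>{1..n}. p (j-1) + 2 \<le> (p j::nat)" "j < j'" "j' \<le> n"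
  shows "p j + 2 \<le> p j'"
  using gaps_mono[OF assms(1), of j j'] assms(2,3) by simp

lemma blocksA:
  fixes S :: "nat set" and s :: "nat \<Rightarrow> real"
  assumes "finite S" "0 \<notin> S"
    "\<forall>i\<in>S. \<forall>i'\<in>S. i < i' \<and> s i \<noteq> s i' \<longrightarrow> (\<exists>k. i<k \<and> k<i' \<and> k \<notin> S)"
  shows "\<exists>(n::nat) (p::nat\<Rightarrow>nat). p 0 = 0 \<and> (\<forall>j\<in>{1..n}. p (j-1) + 2 \<le> p j)
     \<and> (\<forall>i\<in>S. \<exists>j\<in>{1..n}. p (j-1) < i \<and> i < p j)
     \<and> (\<forall>j\<in>{1..n}. \<forall>i\<in>S. \<forall>i'\<in>S. p (j-1) < i \<and> i < p j \<and> p (j-1) < i' \<and> i' < p j \<longrightarrow> s i = s i')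
     \<and> (S \<noteq> {} \<longrightarrow> n \<ge> 1 \<and> p (n-1) < Max S \<and> p n = Max S + 1)"
  using assms
proof (induction S rule: finite_linorder_max_induct)
  case empty
  show ?case by (rule exI[of _ 0], rule exI[of _ "\<lambda>_. 0"]) auto
next
  case (insert b A)
  have A0: "0 \<notin> A" and b0: "b \<noteq> 0" using insert.prems by auto
  have condA: "\<forall>i\<in>A. \<forall>i'\<in>A. i < i' \<and> s i \<noteq> s i' \<longrightarrow> (\<exists>k. i<k \<and> k<i' \<and> k \<notin> A)"
  proof (intro ballI impI)
    fix i i' assume ii: "i \<in> A" "i' \<in> A" "i < i' \<and> s i \<noteq> s i'"
    then obtain k where "i<k" "k<i'" "k \<notin> insert b A" using insert.prems(2) by blast
    then show "\<exists>k. i<k \<and> k<i' \<and> k \<notin> A" by auto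
  qed
  obtain n :: nat and p :: "nat \<Rightarrow> nat" where p0: "p 0 = 0" and gp: "\<forall>j\<in>{1..n}. p (j-1) + 2 \<le> p j"
    and cov: "\<forall>i\<in>A. \<exists>j\<in>{1..n}. p (j-1) < i \<and> i < p j"
    and sg: "\<forall>j\<in>{1..n}. \<forall>i\<in>A. \<forall>i'\<in>A. p (j-1) < i \<and> i < p j \<and> p (j-1) < i' \<and> i' < p j \<longrightarrow> s i = s i'"
    and mx: "A \<noteq> {} \<longrightarrow> n \<ge> 1 \<and> p (n-1) < Max A \<and> p n = Max A + 1"
    using insert.IH[OF A0 condA] by blast
  have Mb: "Max (insert b A) = b" using insert.hyps by (simp add: Max_insert2 less_imp_le)
  show ?case
  proof (cases "A = {}")
    case True
    show ?thesis
      by (rule exI[of _ 1], rule exI[of _ "\<lambda>j. if j = 0 then 0 else b + 1"]) (use True b0 in auto)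
  next
    case False
    define a where "a = Max A"
    have aA: "a \<in> A" and ab: "a < b" and aM: "\<forall>i\<in>A. i \<le> a" using False insert.hyps by (auto simp: a_def)
    have n1: "n \<ge> 1" and pn1: "p (n-1) < a" and pn: "p n = a + 1" using mx False by (auto simp: a_def)
    have nn: "n - 1 \<noteq> n" using n1 by simp
    have pj_le: "\<And>j. j \<le> n \<Longrightarrow> p j \<le> p n" using gaps_mono[OF gp] by fastforce
    show ?thesis
    proof (cases "s a = s b")
      case True
      define p' where "p' = p(n := b + 1)"
      show ?thesis
      proof (rule exI[of _ n], rule exI[of _ p'], intro conjI)
        show "p' 0 = 0" using p0 n1 by (simp add: p'_def)
        show "\<forall>j\<in>{1..n}. p' (j-1) + 2 \<le> p' j"
        proof
          fix j assume j: "j \<in> {1..n}"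
          show "p' (j-1) + 2 \<le> p' j"
          proof (cases "j = n")
            case True then show ?thesis using pn1 ab n1 by (simp add: p'_def)
          next
            case False then have "j - 1 \<noteq> n" "j \<noteq> n" using j by auto
            then show ?thesis using gp j by (simp add: p'_def)
          qed
        qed
        show "\<forall>i\<in>insert b A. \<exists>j\<in>{1..n}. p' (j-1) < i \<and> i < p' j"
        proof
          fix i assume i: "i \<in> insert b A"
          show "\<exists>j\<in>{1..n}. p' (j-1) < i \<and> i < p' j"
          proof (cases "i = b")
            case True then show ?thesis using pn1 ab n1 by (intro bexI[of _ n]) (auto simp: p'_def)
          next
            case False
            then have iA: "i \<in> A" using i by auto
            then obtain j where j: "j \<in> {1..n}" "p (j-1) < i" "i < p j" using cov by blast
            show ?thesis
            proof (cases "j = n")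
              case True then show ?thesis using j aM iA ab by (intro bexI[of _ n]) (auto simp: p'_def)
            next
              case False then show ?thesis using j by (intro bexI[of _ j]) (auto simp: p'_def)
            qed
          qed
        qed
        show "\<forall>j\<in>{1..n}. \<forall>i\<in>insert b A. \<forall>i'\<in>insert b A. p' (j-1) < i \<and> i < p' j \<and> p' (j-1) < i' \<and> i' < p' j \<longrightarrow> s i = s i'"
        proof (intro ballI impI)
          fix j i i' assume j: "j \<in> {1..n}" and i: "i \<in> insert b A" and i': "i' \<in> insert b A"
            and h: "p' (j-1) < i \<and> i < p' j \<and> p' (j-1) < i' \<and> i' < p' j"
          show "s i = s i'"
          proof (cases "j = n")
            case True
            have h2: "p (n-1) < i" "p (n-1) < i'" using h True n1 nn by (auto simp: p'_def)
            have "s x = s b" if "x \<in> insert b A" "p (n-1) < x" for x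
            proof (cases "x = b")
              case False
              then have "x \<in> A" using that by auto
              then have "s x = s a" using sg[rule_format, of n x a] n1 that aA aM pn by force
              then show ?thesis using \<open>s a = s b\<close> by simp
            qed simp
            then show ?thesis using h2 i i' by metis
          next
            case False
            then have jn: "j < n" using j by auto
            have "j \<le> n - 1" using jn by simp
            then have "p j \<le> p (n-1)" using gaps_mono[OF gp, of j "n-1"] jn by simp
            then have "i \<noteq> b" "i' \<noteq> b" using h False pn1 ab by (auto simp: p'_def)
            moreover have "j - 1 \<noteq> n" "j \<noteq> n" using jn by auto
            ultimately have "i \<in> A" "i' \<in> A" "p (j-1) < i" "i < p j" "p (j-1) < i'" "i' < p j"
              using i i' h by (auto simp: p'_def)
            then show ?thesis using sg j by blast
          qed
        qed
        show "insert b A \<noteq> {} \<longrightarrow> 1 \<le> n \<and> p' (n-1) < Max (insert b A) \<and> p' n = Max (insert b A) + 1"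
          using Mb n1 pn1 ab nn by (simp add: p'_def)
      qed
    next
      case False
      have "\<exists>k. a < k \<and> k < b \<and> k \<notin> insert b A"
        using insert.prems(2)[rule_format, of a b] aA ab False by simp
      then obtain k where k: "a < k" "k < b" "k \<notin> insert b A" by blast
      define p' where "p' = p(Suc n := b + 1)"
      show ?thesis
      proof (rule exI[of _ "Suc n"], rule exI[of _ p'], intro conjI)
        show "p' 0 = 0" using p0 by (simp add: p'_def)
        show "\<forall>j\<in>{1..Suc n}. p' (j-1) + 2 \<le> p' j"
        proof
          fix j assume j: "j \<in> {1..Suc n}"
          show "p' (j-1) + 2 \<le> p' j"
          proof (cases "j = Suc n")
            case True then show ?thesis using pn k by (simp add: p'_def)
          next
            case False then have "j - 1 \<noteq> Suc n" "j \<noteq> Suc n" "j \<in> {1..n}" using j by auto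
            then show ?thesis using gp by (simp add: p'_def)
          qed
        qed
        show "\<forall>i\<in>insert b A. \<exists>j\<in>{1..Suc n}. p' (j-1) < i \<and> i < p' j"
        proof
          fix i assume i: "i \<in> insert b A"
          show "\<exists>j\<in>{1..Suc n}. p' (j-1) < i \<and> i < p' j"
          proof (cases "i = b")
            case True then show ?thesis using pn k by (intro bexI[of _ "Suc n"]) (auto simp: p'_def)
          next
            case False
            then have iA: "i \<in> A" using i by auto
            then obtain j where j: "j \<in> {1..n}" "p (j-1) < i" "i < p j" using cov by blast
            then show ?thesis by (intro bexI[of _ j]) (auto simp: p'_def)
          qed
        qed
        show "\<forall>j\<in>{1..Suc n}. \<forall>i\<in>insert b A. \<forall>i'\<in>insert b A. p' (j-1) < i \<and> i < p' j \<and> p' (j-1) < i' \<and> i' < p' j \<longrightarrow> s i = s i'"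
        proof (intro ballI impI)
          fix j i i' assume j: "j \<in> {1..Suc n}" and i: "i \<in> insert b A" and i': "i' \<in> insert b A"
            and h: "p' (j-1) < i \<and> i < p' j \<and> p' (j-1) < i' \<and> i' < p' j"
          show "s i = s i'"
          proof (cases "j = Suc n")
            case True
            then have "a + 1 < i" "a + 1 < i'" using h pn by (auto simp: p'_def)
            then have "i = b" "i' = b" using i i' aM by force+
            then show ?thesis by simp
          next
            case False
            then have jn: "j \<le> n" using j by auto
            have "p j \<le> a + 1" using pj_le[OF jn] pn by simp
            then have "i \<noteq> b" "i' \<noteq> b" using h False k jn by (auto simp: p'_def)
            moreover have "j - 1 \<noteq> Suc n" "j \<noteq> Suc n" "j \<in> {1..n}" using jn j by auto
            ultimately have "i \<in> A" "i' \<in> A" "p (j-1) < i" "i < p j" "p (j-1) < i'" "i' < p j"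
              using i i' h by (auto simp: p'_def)
            then show ?thesis using sg \<open>j \<in> {1..n}\<close> by blast
          qed
        qed
        show "insert b A \<noteq> {} \<longrightarrow> 1 \<le> Suc n \<and> p' (Suc n - 1) < Max (insert b A) \<and> p' (Suc n) = Max (insert b A) + 1"
          using Mb pn k by (simp add: p'_def)
      qed
    qed
  qed
qed




lemma blocks_disjoint:
  fixes p :: "nat \<Rightarrow> nat"
  assumes gp: "\<forall>j\<in>{1..n}. p (j-1) + 2 \<le> p j" and j: "j \<in> {1..n}" "j' \<in> {1..n}" "j \<noteq> j'"
  shows "{i. p (j-1) < i \<and> i < p j} \<inter> {i. p (j'-1) < i \<and> i < p j'} = {}"
proof -
  { fix a b :: nat assume ab: "a < b" "a \<in> {1..n}" "b \<in> {1..n}"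
    then have "a \<le> b - 1" by simp
    moreover have "b - 1 \<le> n" using ab by auto
    ultimately have "p a + 2 * (b - 1 - a) \<le> p (b-1)" by (rule gaps_mono[OF gp])
    then have "p a \<le> p (b-1)" by linarith
    then have "{i. p (a-1) < i \<and> i < p a} \<inter> {i. p (b-1) < i \<and> i < p b} = {}" by auto }
  note * = this
  show ?thesis
  proof (cases "j < j'")
    case True then show ?thesis using *[of j j'] j by auto
  next
    case False then have "j' < j" using j by auto
    then show ?thesis using *[of j' j] j by auto
  qed
qed

lemma blocks_sum:
  fixes p :: "nat \<Rightarrow> nat" and g :: "nat \<Rightarrow> 'b::comm_monoid_add"
  assumes gp: "\<forall>j\<in>{1..n}. p (j-1) + 2 \<le> p j" and fin: "finite S"
    and cov: "\<forall>i\<in>S. \<exists>j\<in>{1..n}. p (j-1) < i \<and> i < p j"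
  shows "(\<Sum>i\<in>S. g i) = (\<Sum>j=1..n. \<Sum>i\<in>S \<inter> {i. p (j-1) < i \<and> i < p j}. g i)"
proof -
  have S: "S = (\<Union>j\<in>{1..n}. S \<inter> {i. p (j-1) < i \<and> i < p j})" using cov by auto
  have "(\<Sum>i\<in>S. g i) = (\<Sum>i\<in>(\<Union>j\<in>{1..n}. S \<inter> {i. p (j-1) < i \<and> i < p j}). g i)"
    using S by simp
  also have "\<dots> = (\<Sum>j=1..n. \<Sum>i\<in>S \<inter> {i. p (j-1) < i \<and> i < p j}. g i)"
  proof (rule sum.UNION_disjoint)
    show "\<forall>j\<in>{1..n}. \<forall>j'\<in>{1..n}. j \<noteq> j' \<longrightarrow>
      S \<inter> {i. p (j-1) < i \<and> i < p j} \<inter> (S \<inter> {i. p (j'-1) < i \<and> i < p j'}) = {}"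
      using blocks_disjoint[OF gp] by blast
  qed (use fin in auto)
  finally show ?thesis .
qed

lemma skipped_apply:
  fixes f :: "nat \<Rightarrow> 'a::real_normed_vector" and S :: "nat set" and s w :: "nat \<Rightarrow> real"
  assumes su: "skipped_unconditional lam f L"
    and fin: "finite S" and S0: "0 \<notin> S" and SL: "\<forall>i\<in>S. enat i \<le> L"
    and s1: "\<forall>i\<in>S. s i = 1 \<or> s i = -1"
    and cond: "\<forall>i\<in>S. \<forall>i'\<in>S. i < i' \<and> s i \<noteq> s i' \<longrightarrow> (\<exists>k. i<k \<and> k<i' \<and> k \<notin> S)"
  shows "norm (\<Sum>i\<in>S. (s i * w i) *\<^sub>R f i) \<le> lam * norm (\<Sum>i\<in>S. w i *\<^sub>R f i)"
proof -
  obtain n :: nat and p :: "nat \<Rightarrow> nat" where p0: "p 0 = 0" and gp: "\<forall>j\<in>{1..n}. p (j-1) + 2 \<le> p j"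
    and cov: "\<forall>i\<in>S. \<exists>j\<in>{1..n}. p (j-1) < i \<and> i < p j"
    and sg: "\<forall>j\<in>{1..n}. \<forall>i\<in>S. \<forall>i'\<in>S. p (j-1) < i \<and> i < p j \<and> p (j-1) < i' \<and> i' < p j \<longrightarrow> s i = s i'"
    using blocksA[OF fin S0 cond] by blast
  define Bl where "Bl j = S \<inter> {i. p (j-1) < i \<and> i < p j}" for j
  define y where "y j = (\<Sum>i\<in>Bl j. w i *\<^sub>R f i)" for j
  define eps where "eps j = (if Bl j = {} then 1 else s (SOME i. i \<in> Bl j))" for j
  have epsB: "eps j = s i" if "j \<in> {1..n}" "i \<in> Bl j" for i j
  proof -
    have ne: "Bl j \<noteq> {}" using that by auto
    have "(SOME i. i \<in> Bl j) \<in> Bl j" using that by (meson someI)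
    then show ?thesis using sg that ne unfolding eps_def Bl_def by auto
  qed
  have "norm (\<Sum>j=1..n. eps j *\<^sub>R y j) \<le> lam * norm (\<Sum>j=1..n. y j)"
  proof (rule su[unfolded skipped_unconditional_def, rule_format], intro conjI ballI)
    show "p 0 = 0" by fact
    show "p (j-1) + 2 \<le> p j" if "j \<in> {1..n}" for j using gp that by auto
    show "eps j = 1 \<or> eps j = -1" if "j \<in> {1..n}" for j
    proof (cases "Bl j = {}")
      case False
      then have "(SOME i. i \<in> Bl j) \<in> S" unfolding Bl_def by (metis (no_types, lifting) Int_iff ex_in_conv someI)
      then show ?thesis using s1 False by (simp add: eps_def)
    qed (simp add: eps_def)
    show "y j \<in> span (f ` {i. p (j - 1) < i \<and> i < p j \<and> enat i \<le> L})" for j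
      unfolding y_def
      by (rule span_sum, rule span_scale, rule span_base) (use SL in \<open>auto simp: Bl_def\<close>)
  qed
  moreover have "(\<Sum>j=1..n. y j) = (\<Sum>i\<in>S. w i *\<^sub>R f i)"
    unfolding y_def Bl_def by (rule blocks_sum[OF gp fin cov, symmetric])
  moreover have "(\<Sum>j=1..n. eps j *\<^sub>R y j) = (\<Sum>i\<in>S. (s i * w i) *\<^sub>R f i)"
  proof -
    have "(\<Sum>j=1..n. eps j *\<^sub>R y j) = (\<Sum>j=1..n. \<Sum>i\<in>Bl j. (s i * w i) *\<^sub>R f i)"
      unfolding y_def scaleR_sum_right
      by (rule sum.cong, simp, rule sum.cong) (simp_all add: epsB)
    also have "\<dots> = (\<Sum>i\<in>S. (s i * w i) *\<^sub>R f i)"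
      unfolding Bl_def by (rule blocks_sum[OF gp fin cov, symmetric])
    finally show ?thesis .
  qed
  ultimately show ?thesis by simp
qed




lemma hb_step:
  fixes V :: "'a::real_normed_vector set" and h l :: "'a \<Rightarrow>\<^sub>L real" and w0 :: 'a and C :: real
  assumes V: "subspace V" and w0: "w0 \<in> V" and lw: "blinfun_apply l w0 = 1" and C: "0 \<le> C"
    and P: "\<And>v. P v \<Longrightarrow> v \<in> V"
    and Pdiff: "\<And>u u'. P u \<Longrightarrow> P u' \<Longrightarrow> P (u' - u)"
    and Pzero: "P 0"
    and Pdec: "\<And>v t. v \<in> V \<Longrightarrow> Q v \<Longrightarrow> P (v - blinfun_apply l v *\<^sub>R w0)"
    and Pscale: "\<And>u t. P u \<Longrightarrow> P (t *\<^sub>R u)"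
    and hyp: "\<And>u. P u \<Longrightarrow> \<bar>blinfun_apply h u\<bar> \<le> C * norm u"
  shows "\<exists>c0. \<forall>v\<in>V. Q v \<longrightarrow> \<bar>blinfun_apply h v + c0 * blinfun_apply l v\<bar> \<le> C * norm v"
proof -
  define Lo where "Lo = {- C * norm (u + w0) - blinfun_apply h u | u. P u}"
  define D where "D = Sup Lo"
  have pair: "- C * norm (u + w0) - blinfun_apply h u \<le> C * norm (u' + w0) - blinfun_apply h u'"
    if "P u" "P u'" for u u'
  proof -
    have "blinfun_apply h u' - blinfun_apply h u = blinfun_apply h (u' - u)" by (simp add: blinfun.diff_right)
    also have "\<dots> \<le> C * norm (u' - u)" using hyp[OF Pdiff[OF that]] by linarith
    also have "norm (u' - u) \<le> norm (u' + w0) + norm (u + w0)"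
      using norm_triangle_ineq4[of "u' + w0" "u + w0"] by simp
    then have "C * norm (u' - u) \<le> C * (norm (u' + w0) + norm (u + w0))" using C by (simp add: mult_left_mono)
    finally show ?thesis by (simp add: algebra_simps)
  qed
  have ne: "Lo \<noteq> {}" using Pzero by (auto simp: Lo_def)
  have bdd: "bdd_above Lo" unfolding bdd_above_def Lo_def using pair[OF _ Pzero] by blast
  have Dlo: "- C * norm (u + w0) - blinfun_apply h u \<le> D" if "P u" for u
    unfolding D_def by (rule cSup_upper[OF _ bdd]) (use that in \<open>auto simp: Lo_def\<close>)
  have Dhi: "D \<le> C * norm (u + w0) - blinfun_apply h u" if "P u" for u
    unfolding D_def by (rule cSup_least[OF ne]) (use pair that in \<open>auto simp: Lo_def\<close>)
  have one: "\<bar>blinfun_apply h u + D\<bar> \<le> C * norm (u + w0)" if "P u" for u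
    using Dlo[OF that] Dhi[OF that] by linarith
  show ?thesis
  proof (rule exI[of _ "D - blinfun_apply h w0"], intro ballI impI)
    fix v assume v: "v \<in> V" "Q v"
    define t where "t = blinfun_apply l v"
    define u where "u = v - t *\<^sub>R w0"
    have Pu: "P u" unfolding u_def t_def by (rule Pdec[OF v])
    have vu: "v = u + t *\<^sub>R w0" by (simp add: u_def)
    have lu: "blinfun_apply l u = 0" unfolding u_def t_def by (simp add: blinfun.diff_right blinfun.scaleR_right lw)
    have lhs: "blinfun_apply h v + (D - blinfun_apply h w0) * blinfun_apply l v = blinfun_apply h u + t * D"
      unfolding vu by (simp add: blinfun.add_right blinfun.scaleR_right lw t_def[symmetric] lu algebra_simps)
    show "\<bar>blinfun_apply h v + (D - blinfun_apply h w0) * blinfun_apply l v\<bar> \<le> C * norm v"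
    proof (cases "t = 0")
      case True
      then show ?thesis using hyp[OF Pu] lhs vu lu by simp
    next
      case False
      have "blinfun_apply h u + t * D = t * (blinfun_apply h ((1/t) *\<^sub>R u) + D)"
        using False by (simp add: blinfun.scaleR_right algebra_simps)
      then have e1: "\<bar>blinfun_apply h u + t * D\<bar> = \<bar>t\<bar> * \<bar>blinfun_apply h ((1/t) *\<^sub>R u) + D\<bar>"
        by (simp add: abs_mult)
      have e2: "\<bar>t\<bar> * \<bar>blinfun_apply h ((1/t) *\<^sub>R u) + D\<bar> \<le> \<bar>t\<bar> * (C * norm ((1/t) *\<^sub>R u + w0))"
        using one[OF Pscale[OF Pu]] by (simp add: mult_left_mono)
      have e3: "\<bar>t\<bar> * norm ((1/t) *\<^sub>R u + w0) = norm v"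
      proof -
        have "\<bar>t\<bar> * norm ((1/t) *\<^sub>R u + w0) = norm (t *\<^sub>R ((1/t) *\<^sub>R u + w0))" by simp
        also have "t *\<^sub>R ((1/t) *\<^sub>R u + w0) = v" using False vu by (simp add: scaleR_add_right)
        finally show ?thesis .
      qed
      have e4: "\<bar>t\<bar> * (C * norm ((1/t) *\<^sub>R u + w0)) = C * norm v" using e3 by (metis mult.left_commute)
      show ?thesis unfolding lhs e1 using e2 e4 by linarith
    qed
  qed
qed



lemma hb_multi:
  fixes V :: "'a::real_normed_vector set" and l :: "nat \<Rightarrow> 'a \<Rightarrow>\<^sub>L real" and w :: "nat \<Rightarrow> 'a" and C :: real
  assumes V: "subspace V" and C: "0 \<le> C" and fin: "finite K"
  shows "\<And>h. (\<forall>k\<in>K. w k \<in> V) \<Longrightarrow> (\<forall>k\<in>K. \<forall>k'\<in>K. blinfun_apply (l k) (w k') = (if k = k' then 1 else 0))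
    \<Longrightarrow> (\<forall>v\<in>V. (\<forall>k\<in>K. blinfun_apply (l k) v = 0) \<longrightarrow> \<bar>blinfun_apply h v\<bar> \<le> C * norm v)
    \<Longrightarrow> \<exists>c. \<forall>v\<in>V. \<bar>blinfun_apply h v + (\<Sum>k\<in>K. c k * blinfun_apply (l k) v)\<bar> \<le> C * norm v"
  using fin
proof (induction K rule: finite_induct)
  case empty
  then show ?case by auto
next
  case (insert k0 K h)
  have wK: "\<forall>k\<in>K. w k \<in> V" and boK: "\<forall>k\<in>K. \<forall>k'\<in>K. blinfun_apply (l k) (w k') = (if k = k' then 1 else 0)"
    using insert.prems by auto
  have w0: "w k0 \<in> V" and lw: "blinfun_apply (l k0) (w k0) = 1" using insert.prems by auto
  have lk: "blinfun_apply (l k) (w k0) = 0" if "k \<in> K" for k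
    using insert.prems(2) that insert.hyps(2) by (metis insertCI)
  define P where "P u \<longleftrightarrow> u \<in> V \<and> (\<forall>k\<in>insert k0 K. blinfun_apply (l k) u = 0)" for u
  define Q where "Q v \<longleftrightarrow> (\<forall>k\<in>K. blinfun_apply (l k) v = 0)" for v
  obtain c0 where c0: "\<forall>v\<in>V. Q v \<longrightarrow> \<bar>blinfun_apply h v + c0 * blinfun_apply (l k0) v\<bar> \<le> C * norm v"
  proof -
    have "\<exists>c0. \<forall>v\<in>V. Q v \<longrightarrow> \<bar>blinfun_apply h v + c0 * blinfun_apply (l k0) v\<bar> \<le> C * norm v"
    proof (rule hb_step[OF V w0 lw C, where P = P])
      show "P u \<Longrightarrow> u \<in> V" for u by (simp add: P_def)
      show "P u \<Longrightarrow> P u' \<Longrightarrow> P (u' - u)" for u u'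
        by (auto simp: P_def blinfun.diff_right V subspace_diff)
      show "P 0" by (simp add: P_def V subspace_0)
      show "P (v - blinfun_apply (l k0) v *\<^sub>R w k0)" if "v \<in> V" "Q v" for v
        using that lk lw w0 by (auto simp: P_def Q_def blinfun.diff_right blinfun.scaleR_right V subspace_diff subspace_scale)
      show "P (t *\<^sub>R u)" if "P u" for u t
        using that by (auto simp: P_def blinfun.scaleR_right V subspace_scale)
      show "\<bar>blinfun_apply h u\<bar> \<le> C * norm u" if "P u" for u
        using insert.prems(3) that by (auto simp: P_def)
    qed
    then show ?thesis using that by blast
  qed
  define h1 where "h1 = h + c0 *\<^sub>R l k0"
  have "\<forall>v\<in>V. (\<forall>k\<in>K. blinfun_apply (l k) v = 0) \<longrightarrow> \<bar>blinfun_apply h1 v\<bar> \<le> C * norm v"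
    using c0 by (simp add: h1_def Q_def blinfun.add_left blinfun.scaleR_left)
  then obtain c where c: "\<forall>v\<in>V. \<bar>blinfun_apply h1 v + (\<Sum>k\<in>K. c k * blinfun_apply (l k) v)\<bar> \<le> C * norm v"
    using insert.IH[OF wK boK] by blast
  show ?case
  proof (rule exI[of _ "c(k0 := c0)"], intro ballI)
    fix v assume v: "v \<in> V"
    have "(\<Sum>k\<in>insert k0 K. (c(k0 := c0)) k * blinfun_apply (l k) v)
        = c0 * blinfun_apply (l k0) v + (\<Sum>k\<in>K. c k * blinfun_apply (l k) v)"
      using insert.hyps by (simp add: sum.insert) (rule sum.cong, auto)
    then show "\<bar>blinfun_apply h v + (\<Sum>k\<in>insert k0 K. (c(k0 := c0)) k * blinfun_apply (l k) v)\<bar> \<le> C * norm v"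
      using c v by (simp add: h1_def blinfun.add_left blinfun.scaleR_left add.assoc)
  qed
qed



locale L5 =
  fixes e :: "nat \<Rightarrow> 'a::banach"
    and estar :: "nat \<Rightarrow> ('a \<Rightarrow>\<^sub>L real)"
    and N :: enat and lam :: real
    and m :: "nat \<Rightarrow> nat" and n :: nat
    and xstar ystar :: "'a \<Rightarrow>\<^sub>L real"
  assumes basis: "schauder_basis N e"
    and biorth: "\<forall>j k. 1 \<le> j \<and> enat j \<le> N \<and> 1 \<le> k \<and> enat k \<le> N \<longrightarrow>
                   blinfun_apply (estar j) (e k) = (if j = k then 1 else 0)"
    and n_pos: "1 \<le> n"
    and m1: "1 \<le> m 1"
    and m_mono: "\<forall>j\<in>{1..<n}. m j < m (Suc j)"
    and mn: "enat (m n) < N"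
    and hyp: "\<forall>x\<in>span (e ` {1..m 1}).
               skipped_unconditional lam (\<lambda>i. if i = 1 then x else e (m 1 + i - 1))
                 (N - enat (m 1) + 1)"
    and xstar_nz: "xstar \<noteq> 0"
    and ystar_nz: "ystar \<noteq> 0"
    and xstar_span: "xstar \<in> span (estar ` {1..m 1})"
    and ystar_van: "\<forall>j\<in>{1..m n}. blinfun_apply ystar (e j) = 0"
begin

abbreviation IN :: "nat \<Rightarrow> bool" where "IN k \<equiv> 1 \<le> k \<and> enat k \<le> N"

lemma bo: "IN j \<Longrightarrow> IN k \<Longrightarrow> blinfun_apply (estar j) (e k) = (if j = k then 1 else 0)"
  using biorth by blast

lemma e_nz: "IN k \<Longrightarrow> e k \<noteq> 0"
  using bo[of k k] by auto

lemma e_inj: "inj_on e {k. IN k}"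
  by (rule inj_onI) (metis bo mem_Collect_eq zero_neq_one)

lemma expansion: "\<exists>a. ((\<lambda>M. \<Sum>k\<in>{k. 1 \<le> k \<and> k \<le> M \<and> enat k \<le> N}. a k *\<^sub>R e k) \<longlonglongrightarrow> x)"
  using basis unfolding schauder_basis_def has_expansion_def by blast

lemma density: "\<exists>s. (\<forall>M. s M \<in> span (e ` {k. IN k})) \<and> s \<longlonglongrightarrow> x"
proof -
  obtain a where a: "(\<lambda>M. \<Sum>k\<in>{k. 1 \<le> k \<and> k \<le> M \<and> enat k \<le> N}. a k *\<^sub>R e k) \<longlonglongrightarrow> x"
    using expansion by blast
  show ?thesis
  proof (intro exI conjI allI)
    show "(\<Sum>k\<in>{k. 1 \<le> k \<and> k \<le> M \<and> enat k \<le> N}. a k *\<^sub>R e k) \<in> span (e ` {k. IN k})" for M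
      by (intro span_sum span_scale span_base) auto
  qed (rule a)
qed

lemma zero_on_basis:
  fixes phi :: "'a \<Rightarrow>\<^sub>L real"
  assumes "\<And>k. IN k \<Longrightarrow> blinfun_apply phi (e k) = 0"
  shows "phi = 0"
proof (rule blinfun_eqI)
  fix x
  obtain s where s: "\<And>M. s M \<in> span (e ` {k. IN k})" "s \<longlonglongrightarrow> x" using density by blast
  have sub: "subspace {y. blinfun_apply phi y = 0}"
    unfolding subspace_def by (simp add: blinfun.add_right blinfun.scaleR_right blinfun.zero_right)
  have z: "blinfun_apply phi y = 0" if "y \<in> span (e ` {k. IN k})" for y
    using real_vector.span_induct[OF that, of "\<lambda>y. blinfun_apply phi y = 0"] sub assms by auto
  have "(\<lambda>M. blinfun_apply phi (s M)) \<longlonglongrightarrow> blinfun_apply phi x"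
    by (rule blinfun.tendsto[OF tendsto_const s(2)])
  moreover have "(\<lambda>M. blinfun_apply phi (s M)) = (\<lambda>M. 0)" using z s(1) by auto
  ultimately have "(\<lambda>M. 0::real) \<longlonglongrightarrow> blinfun_apply phi x" by simp
  then have "blinfun_apply phi x = 0" using LIMSEQ_unique[OF _ tendsto_const] by metis
  then show "blinfun_apply phi x = blinfun_apply 0 x" by simp
qed

lemma m_less: "1 \<le> i \<Longrightarrow> i < j \<Longrightarrow> j \<le> n \<Longrightarrow> m i < m j"
proof -
  assume h: "1 \<le> i" "i < j" "j \<le> n"
  have "Suc i \<le> j" using h by simp
  then show ?thesis using h(3)
  proof (induction j rule: dec_induct)
    case base
    then have "i \<in> {1..<n}" using h(1) by simp
    then show ?case using m_mono by blast
  next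
    case (step k)
    then have "k \<in> {1..<n}" using h(1) by simp
    then have "m k < m (Suc k)" using m_mono by blast
    then show ?case using step by simp
  qed
qed

lemma m_le: "1 \<le> i \<Longrightarrow> i \<le> j \<Longrightarrow> j \<le> n \<Longrightarrow> m i \<le> m j"
  using m_less by (cases "i = j") (auto simp: order_less_imp_le)

lemma m_IN: "1 \<le> j \<Longrightarrow> j \<le> n \<Longrightarrow> IN (m j)"
proof -
  assume j: "1 \<le> j" "j \<le> n"
  have "m 1 \<le> m j" "m j \<le> m n" using m_le j by auto
  then show "IN (m j)" using m1 mn by (metis dual_order.trans enat_ord_simps(1) less_imp_le)
qed

lemma lt_N_IN: "1 \<le> k \<Longrightarrow> k \<le> m n \<Longrightarrow> IN k"
  using mn by (metis enat_ord_simps(1) le_less_trans less_imp_le)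

lemma xstar_van: "IN k \<Longrightarrow> m 1 < k \<Longrightarrow> blinfun_apply xstar (e k) = 0"
proof -
  assume k: "IN k" "m 1 < k"
  have sub: "subspace {phi::'a \<Rightarrow>\<^sub>L real. blinfun_apply phi (e k) = 0}"
    unfolding subspace_def by (simp add: blinfun.add_left blinfun.scaleR_left)
  have el: "blinfun_apply phi (e k) = 0" if ph: "phi \<in> estar ` {1..m 1}" for phi
  proof -
    obtain j where j: "j \<in> {1..m 1}" "phi = estar j" using ph by blast
    have "m 1 \<le> m n" using m_le[of 1 n] n_pos by simp
    then have "IN j" using j lt_N_IN[of j] by simp
    then show ?thesis using bo[of j k] k j by simp
  qed
  show ?thesis
    using real_vector.span_induct[OF xstar_span, of "\<lambda>phi. blinfun_apply phi (e k) = 0"] sub el by auto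
qed

lemma lam_ge1: "1 \<le> lam"
proof -
  have e1: "e 1 \<in> span (e ` {1..m 1})" using m1 by (intro span_base) auto
  have IN1: "IN 1" using lt_N_IN[of 1] m_le[of 1 n] m1 n_pos by auto
  have L1: "enat 1 \<le> N - enat (m 1) + 1" by (cases N) (auto simp: one_enat_def)
  have "norm (\<Sum>i\<in>{1}. ((\<lambda>_. 1::real) i * (\<lambda>_. 1::real) i) *\<^sub>R (\<lambda>i. if i = 1 then e 1 else e (m 1 + i - 1)) i)
    \<le> lam * norm (\<Sum>i\<in>{1}. (\<lambda>_. 1::real) i *\<^sub>R (\<lambda>i. if i = 1 then e 1 else e (m 1 + i - 1)) i)"
    by (rule skipped_apply[OF hyp[rule_format, OF e1]]) (use L1 in auto)
  then have "norm (e 1) \<le> lam * norm (e 1)" by simp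
  then show ?thesis using e_nz[OF IN1] by simp
qed

end



context L5 begin

definition fsl where "fsl = [xstar] @ map (\<lambda>j. estar (m j)) [2..<n] @ [ystar]"
definition d where "d = length fsl"
definition ff where "ff i = fsl ! (i - 1)"
definition P where "P i = (if i = d then m n else m i)"

lemma d_eq: "d = (if n = 1 then 2 else n)"
  using n_pos by (auto simp: d_def fsl_def)

lemma d_ge2: "2 \<le> d" using d_eq n_pos by auto

lemma ff1: "ff 1 = xstar" by (simp add: ff_def fsl_def)

lemma ffd: "ff d = ystar"
proof -
  have "d - 1 = length ([xstar] @ map (\<lambda>j. estar (m j)) [2..<n])" using n_pos by (auto simp: d_def fsl_def)
  then show ?thesis unfolding ff_def fsl_def by (metis append.assoc nth_append_length)
qed

lemma ffmid: "2 \<le> i \<Longrightarrow> i \<le> d - 1 \<Longrightarrow> ff i = estar (m i)"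
proof -
  assume i: "2 \<le> i" "i \<le> d - 1"
  then have n3: "n \<ge> 3" "i < n" using d_eq by (auto split: if_splits)
  have ii: "i - 1 = Suc (i - 2)" using i by simp
  have "fsl ! (i - 1) = (map (\<lambda>j. estar (m j)) [2..<n] @ [ystar]) ! (i - 2)"
    unfolding fsl_def ii by simp
  also have "\<dots> = map (\<lambda>j. estar (m j)) [2..<n] ! (i - 2)"
  proof -
    have lt: "i - 2 < n - 2" using n3 i by simp
    then show ?thesis by (simp add: nth_append)
  qed
  also have "\<dots> = estar (m i)"
  proof -
    have "Suc (Suc (i - 2)) = i" using i by simp
    then show ?thesis using n3 i by simp
  qed
  finally show ?thesis by (simp add: ff_def)
qed

lemma P1: "P 1 = m 1" using d_ge2 by (simp add: P_def)
lemma Pd: "P d = m n" by (simp add: P_def)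
lemma Pmid: "i \<le> d - 1 \<Longrightarrow> P i = m i"
proof -
  assume "i \<le> d - 1"
  then have "i \<noteq> d" using d_ge2 by arith
  then show ?thesis by (simp add: P_def)
qed

lemma mid_n: "2 \<le> i \<Longrightarrow> i \<le> d - 1 \<Longrightarrow> i < n \<and> d = n"
  using d_eq by (auto split: if_splits)

lemma Pmono: "1 \<le> i \<Longrightarrow> i \<le> i' \<Longrightarrow> i' \<le> d \<Longrightarrow> P i \<le> P i'"
proof -
  assume h: "1 \<le> i" "i \<le> i'" "i' \<le> d"
  show "P i \<le> P i'"
  proof (cases "i' = d")
    case True
    then show ?thesis
    proof (cases "i = d")
      case False
      then have "i = 1 \<or> (2 \<le> i \<and> i \<le> d - 1)" using h True by auto
      then show ?thesis using True P1 Pd Pmid[of i] mid_n[of i] m_le[of 1 n] m_le[of i n] n_pos by auto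
    qed simp
  next
    case False
    then have "i' \<le> d - 1" "i \<le> d - 1" using h by auto
    moreover have "i' \<le> n" using \<open>i' \<le> d - 1\<close> d_eq by (auto split: if_splits)
    ultimately show ?thesis using Pmid m_le h by simp
  qed
qed

lemma Pstrict: "1 \<le> i' \<Longrightarrow> i' < i \<Longrightarrow> i \<le> d - 1 \<Longrightarrow> P i' < P i"
proof -
  assume h: "1 \<le> i'" "i' < i" "i \<le> d - 1"
  then have "2 \<le> i" by auto
  then have "i < n" using mid_n h by auto
  then show ?thesis using h Pmid m_less by auto
qed

lemma Pmid_gt: "2 \<le> i \<Longrightarrow> i \<le> d - 1 \<Longrightarrow> m 1 < P i \<and> P i < m n"
proof -
  assume i: "2 \<le> i" "i \<le> d - 1"
  then have "i < n" using mid_n by auto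
  then show ?thesis using Pmid[OF i(2)] m_less[of 1 i] m_less[of i n] i by auto
qed


lemma ex_j1: "\<exists>j. 1 \<le> j \<and> j \<le> m 1 \<and> blinfun_apply xstar (e j) \<noteq> 0"
proof (rule ccontr)
  assume "\<not> ?thesis"
  then have "blinfun_apply xstar (e k) = 0" if "IN k" for k
    using that xstar_van[of k] by (cases "k \<le> m 1") auto
  then have "xstar = 0" by (rule zero_on_basis)
  then show False using xstar_nz by simp
qed

lemma ex_jd: "\<exists>j. IN j \<and> m n < j \<and> blinfun_apply ystar (e j) \<noteq> 0"
proof (rule ccontr)
  assume "\<not> ?thesis"
  then have "blinfun_apply ystar (e k) = 0" if "IN k" for k
    using that ystar_van by (cases "k \<le> m n") auto
  then have "ystar = 0" by (rule zero_on_basis)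
  then show False using ystar_nz by simp
qed

definition j1 where "j1 = (SOME j. 1 \<le> j \<and> j \<le> m 1 \<and> blinfun_apply xstar (e j) \<noteq> 0)"
definition jd where "jd = (SOME j. IN j \<and> m n < j \<and> blinfun_apply ystar (e j) \<noteq> 0)"

lemma j1: "1 \<le> j1" "j1 \<le> m 1" "blinfun_apply xstar (e j1) \<noteq> 0"
  using someI_ex[OF ex_j1] unfolding j1_def by auto
lemma jd: "IN jd" "m n < jd" "blinfun_apply ystar (e jd) \<noteq> 0"
  using someI_ex[OF ex_jd] unfolding jd_def by auto

lemma m1_le_mn: "m 1 \<le> m n" using m_le[of 1 n] n_pos by simp

lemma j1_IN: "IN j1" using j1 lt_N_IN m1_le_mn by auto

definition u where "u i = (if i = 1 then (1 / blinfun_apply xstar (e j1)) *\<^sub>R e j1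
   else if i = d then (1 / blinfun_apply ystar (e jd)) *\<^sub>R e jd else e (m i))"

lemma u_fin: "i \<in> {1..d} \<Longrightarrow> u i \<in> span (e ` {k. IN k})"
proof -
  assume i: "i \<in> {1..d}"
  have a: "e j1 \<in> span (e ` {k. IN k})" "e jd \<in> span (e ` {k. IN k})" using j1_IN jd by (auto intro: span_base)
  show ?thesis
  proof (cases "i = 1 \<or> i = d")
    case True then show ?thesis using a by (auto simp: u_def intro: span_scale)
  next
    case False
    then have "i < n" "1 \<le> i" using mid_n[of i] i by auto
    then have "e (m i) \<in> span (e ` {k. IN k})" using m_IN[of i] by (auto intro: span_base)
    then show ?thesis using False by (simp add: u_def)
  qed
qed

lemma ff_eval: "i \<in> {1..d} \<Longrightarrow> IN k \<Longrightarrow>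
   blinfun_apply (ff i) (e k) = (if i = 1 then blinfun_apply xstar (e k) else if i = d then blinfun_apply ystar (e k)
      else (if m i = k then 1 else 0))"
proof -
  assume i: "i \<in> {1..d}" and k: "IN k"
  show ?thesis
  proof (cases "i = 1")
    case True
    then have "ff i = xstar" using ff1 by simp
    then show ?thesis using True by simp
  next
    case F1: False
    show ?thesis
    proof (cases "i = d")
      case True then show ?thesis using F1 by (simp add: ffd)
    next
      case False
      then have "2 \<le> i" "i \<le> d - 1" using i F1 by auto
      moreover then have "i < n" using mid_n by auto
      ultimately show ?thesis using F1 False ffmid bo[of "m i" k] m_IN[of i] k by auto
    qed
  qed
qed

lemma biorth_fs: "\<forall>i\<in>{1..length fsl}. \<forall>j\<in>{1..length fsl}.
   blinfun_apply (fsl!(i-1)) (u j) = (if i = j then 1 else 0)"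
proof (intro ballI)
  fix i j assume i: "i \<in> {1..length fsl}" and j: "j \<in> {1..length fsl}"
  then have i': "i \<in> {1..d}" and j': "j \<in> {1..d}" by (auto simp: d_def)
  have d1: "1 \<noteq> d" using d_ge2 by simp
  have x0: "blinfun_apply xstar (e k) = 0" if "IN k" "m 1 < k" for k using xstar_van that by simp
  have y0: "blinfun_apply ystar (e k) = 0" if "1 \<le> k" "k \<le> m n" for k using ystar_van that by simp
  have mids: "2 \<le> j \<and> j \<le> d - 1 \<and> j < n" if "j \<in> {1..d}" "j \<noteq> 1" "j \<noteq> d" for j
    using that mid_n[of j] by auto
  have uj: "u j = (if j = 1 then (1 / blinfun_apply xstar (e j1)) *\<^sub>R e j1
   else if j = d then (1 / blinfun_apply ystar (e jd)) *\<^sub>R e jd else e (m j))" by (simp add: u_def)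
  show "blinfun_apply (fsl!(i-1)) (u j) = (if i = j then 1 else 0)"
    unfolding ff_def[symmetric]
  proof -
    consider "j = 1" | "j = d" | "j \<noteq> 1" "j \<noteq> d" by blast
    then show "blinfun_apply (ff i) (u j) = (if i = j then 1 else 0)"
    proof cases
      case 1
      have "blinfun_apply (ff i) (e j1) = (if i = 1 then blinfun_apply xstar (e j1) else 0)"
      proof -
        have "i \<noteq> 1 \<Longrightarrow> i = d \<Longrightarrow> blinfun_apply ystar (e j1) = 0" using y0 j1 m1_le_mn by simp
        moreover have "i \<noteq> 1 \<Longrightarrow> i \<noteq> d \<Longrightarrow> m i \<noteq> j1" using mids[OF i'] Pmid_gt[of i] Pmid[of i] j1 by fastforce
        ultimately show ?thesis using ff_eval[OF i' j1_IN] by auto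
      qed
      then show ?thesis using 1 j1 d1 by (auto simp: u_def blinfun.scaleR_right)
    next
      case 2
      have "blinfun_apply (ff i) (e jd) = (if i = d then blinfun_apply ystar (e jd) else 0)"
      proof -
        have "i = 1 \<Longrightarrow> blinfun_apply xstar (e jd) = 0" using x0 jd m1_le_mn by simp
        moreover have "i \<noteq> 1 \<Longrightarrow> i \<noteq> d \<Longrightarrow> m i \<noteq> jd" using mids[OF i'] Pmid_gt[of i] Pmid[of i] jd by fastforce
        ultimately show ?thesis using ff_eval[OF i' jd(1)] d1 by auto
      qed
      then show ?thesis using 2 jd d1 by (auto simp: u_def blinfun.scaleR_right)
    next
      case 3
      then have jm: "2 \<le> j" "j \<le> d - 1" "j < n" using mids[OF j'] by auto
      have ujm: "u j = e (m j)" using 3 by (simp add: u_def)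
      have INj: "IN (m j)" using m_IN jm by simp
      have gt: "m 1 < m j" "m j < m n" using Pmid_gt[of j] Pmid[of j] jm by auto
      have "blinfun_apply (ff i) (e (m j)) = (if i = j then 1 else 0)"
      proof -
        have "i = 1 \<Longrightarrow> blinfun_apply xstar (e (m j)) = 0" using x0 INj gt by simp
        moreover have "i = d \<Longrightarrow> blinfun_apply ystar (e (m j)) = 0" using y0 INj gt by simp
        moreover have "i \<noteq> 1 \<Longrightarrow> i \<noteq> d \<Longrightarrow> (m i = m j) = (i = j)"
        proof -
          assume "i \<noteq> 1" "i \<noteq> d"
          then have im: "2 \<le> i" "i < n" using mids[OF i'] by auto
          show "(m i = m j) = (i = j)"
          proof
            assume "m i = m j"
            then show "i = j" using m_less[of i j] m_less[of j i] im jm by (metis linorder_neqE_nat less_irrefl order.trans one_le_numeral less_imp_le)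
          qed simp
        qed
        ultimately show ?thesis using ff_eval[OF i' INj] 3 by auto
      qed
      then show ?thesis using ujm by simp
    qed
  qed
qed

lemma fs_props:
  shows "distinct fsl" and "\<not> real_vector.dependent (set fsl)"
    and "\<And>g i. g \<in> span (set fsl) \<Longrightarrow> i \<in> {1..d} \<Longrightarrow> dual_functional fsl i g = blinfun_apply g (u i)"
    and "\<And>g. g \<in> span (set fsl) \<Longrightarrow> g = (\<Sum>i=1..d. blinfun_apply g (u i) *\<^sub>R ff i)"
  using G1[OF biorth_fs] unfolding d_def ff_def by auto

lemma ff_in: "i \<in> {1..d} \<Longrightarrow> ff i \<in> set fsl"
  unfolding ff_def d_def by auto

lemma ff_u: "i \<in> {1..d} \<Longrightarrow> j \<in> {1..d} \<Longrightarrow> blinfun_apply (ff i) (u j) = (if i = j then 1 else 0)"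
  using biorth_fs unfolding ff_def d_def by auto

end



context L5 begin

lemma enat_shift: "IN q \<Longrightarrow> m 1 < q \<Longrightarrow> enat (q - m 1 + 1) \<le> N - enat (m 1) + 1"
  by (cases N) (auto simp: one_enat_def)

lemma TB:
  fixes Q :: "nat set" and W tau :: "nat \<Rightarrow> real" and tau0 :: real
  assumes finQ: "finite Q" and QIN: "\<forall>q\<in>Q. IN q"
    and tau1: "\<forall>q\<in>Q. tau q = 1 \<or> tau q = -1" and tau01: "tau0 = 1 \<or> tau0 = -1"
    and head: "\<forall>q\<in>Q. q \<le> m 1 \<longrightarrow> tau q = tau0"
    and gap: "\<forall>q q'. (q \<in> Q \<or> q = m 1) \<longrightarrow> q' \<in> Q \<longrightarrow> m 1 \<le> q \<longrightarrow> q < q' \<longrightarrow>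
       (if q = m 1 then tau0 else tau q) \<noteq> tau q' \<longrightarrow> (\<exists>k. m 1 < k \<and> q < k \<and> k < q' \<and> k \<notin> Q)"
  shows "norm (\<Sum>q\<in>Q. (tau q * W q) *\<^sub>R e q) \<le> lam * norm (\<Sum>q\<in>Q. W q *\<^sub>R e q)"
proof -
  define Q1 where "Q1 = {q\<in>Q. q \<le> m 1}"
  define Q2 where "Q2 = {q\<in>Q. m 1 < q}"
  define x0 where "x0 = (\<Sum>q\<in>Q1. W q *\<^sub>R e q)"
  define f where "f i = (if i = 1 then x0 else e (m 1 + i - 1))" for i
  define ph where "ph q = q - m 1 + 1" for q
  define S where "S = insert 1 (ph ` Q2)"
  define Ws where "Ws i = (if i = 1 then 1 else W (m 1 + i - 1))" for i
  define s where "s i = (if i = 1 then tau0 else tau (m 1 + i - 1))" for i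
  have finQ1: "finite Q1" and finQ2: "finite Q2" using finQ by (auto simp: Q1_def Q2_def)
  have QU: "Q = Q1 \<union> Q2" and QD: "Q1 \<inter> Q2 = {}" by (auto simp: Q1_def Q2_def)
  have x0span: "x0 \<in> span (e ` {1..m 1})"
    unfolding x0_def by (intro span_sum span_scale span_base) (use QIN in \<open>auto simp: Q1_def\<close>)
  have su: "skipped_unconditional lam f (N - enat (m 1) + 1)"
    using hyp x0span unfolding f_def by blast
  have phinv: "m 1 + ph q - 1 = q" if "q \<in> Q2" for q using that by (auto simp: ph_def Q2_def)
  have ph2: "2 \<le> ph q" if "q \<in> Q2" for q using that by (auto simp: ph_def Q2_def)
  have injph: "inj_on ph Q2" by (rule inj_onI) (metis phinv)
  have one_notin: "1 \<notin> ph ` Q2" using ph2 by fastforce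
  have finS: "finite S" using finQ2 by (simp add: S_def)
  have S0: "0 \<notin> S" using ph2 by (fastforce simp: S_def)
  have SL: "\<forall>i\<in>S. enat i \<le> N - enat (m 1) + 1"
  proof
    fix i assume "i \<in> S"
    then consider "i = 1" | q where "q \<in> Q2" "i = ph q" by (auto simp: S_def)
    then show "enat i \<le> N - enat (m 1) + 1"
    proof cases
      case 1 then show ?thesis by (cases N) (auto simp: one_enat_def)
    next
      case 2 then show ?thesis using enat_shift QIN by (auto simp: ph_def Q2_def)
    qed
  qed
  have s1: "\<forall>i\<in>S. s i = 1 \<or> s i = -1"
    using tau01 tau1 phinv ph2 by (auto simp: S_def s_def Q2_def)
  have sph: "s (ph q) = tau q" if "q \<in> Q2" for q using phinv[OF that] ph2[OF that] by (simp add: s_def)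
  have cond: "\<forall>i\<in>S. \<forall>i'\<in>S. i < i' \<and> s i \<noteq> s i' \<longrightarrow> (\<exists>k. i<k \<and> k<i' \<and> k \<notin> S)"
  proof (intro ballI impI)
    fix i i' assume i: "i \<in> S" and i': "i' \<in> S" and ii: "i < i' \<and> s i \<noteq> s i'"
    have "i \<noteq> 0" using i S0 by metis
    then have "i' \<noteq> 1" using ii by simp
    then obtain q' where q': "q' \<in> Q2" "i' = ph q'" using i' by (auto simp: S_def)
    obtain q where q: "q \<in> Q \<or> q = m 1" "m 1 \<le> q" "i = ph q" "(if q = m 1 then tau0 else tau q) = s i"
    proof (cases "i = 1")
      case True
      then show ?thesis using that[of "m 1"] by (simp add: ph_def s_def)
    next
      case False
      then obtain q where "q \<in> Q2" "i = ph q" using i by (auto simp: S_def)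
      then show ?thesis using that[of q] sph by (auto simp: Q2_def)
    qed
    have "q < q'" using q q' ii by (auto simp: ph_def Q2_def)
    moreover have "(if q = m 1 then tau0 else tau q) \<noteq> tau q'" using q ii sph q' by simp
    moreover have "q' \<in> Q" using q' by (simp add: Q2_def)
    ultimately have "\<exists>k. m 1 < k \<and> q < k \<and> k < q' \<and> k \<notin> Q"
      using gap[rule_format, of q q'] q(1,2) by blast
    then obtain k where k: "m 1 < k" "q < k" "k < q'" "k \<notin> Q" by blast
    show "\<exists>k. i<k \<and> k<i' \<and> k \<notin> S"
    proof (intro exI conjI)
      show "i < ph k" using k q by (auto simp: ph_def)
      show "ph k < i'" using k q' by (auto simp: ph_def Q2_def)
      show "ph k \<notin> S"
      proof
        assume "ph k \<in> S"
        moreover have "ph k \<noteq> 1" using k by (simp add: ph_def)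
        ultimately obtain k' where "k' \<in> Q2" "ph k = ph k'" by (auto simp: S_def)
        then have "k = k'" using k by (auto simp: ph_def Q2_def)
        then show False using \<open>k' \<in> Q2\<close> k by (simp add: Q2_def)
      qed
    qed
  qed
  have main: "norm (\<Sum>i\<in>S. (s i * Ws i) *\<^sub>R f i) \<le> lam * norm (\<Sum>i\<in>S. Ws i *\<^sub>R f i)"
    by (rule skipped_apply[OF su finS S0 SL s1 cond])
  have sumS: "(\<Sum>i\<in>S. G i) = G 1 + (\<Sum>q\<in>Q2. G (ph q))" for G :: "nat \<Rightarrow> 'a"
    unfolding S_def using finQ2 one_notin by (simp add: sum.reindex[OF injph])
  have aux1: "Ws (ph q) *\<^sub>R f (ph q) = W q *\<^sub>R e q" if "q \<in> Q2" for q
  proof -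
    have "ph q \<noteq> 1" using ph2[OF that] by simp
    then show ?thesis unfolding Ws_def f_def if_not_P[OF \<open>ph q \<noteq> 1\<close>] phinv[OF that] by simp
  qed
  have aux2: "(s (ph q) * Ws (ph q)) *\<^sub>R f (ph q) = (tau q * W q) *\<^sub>R e q" if "q \<in> Q2" for q
  proof -
    have "ph q \<noteq> 1" using ph2[OF that] by simp
    then show ?thesis unfolding Ws_def f_def s_def if_not_P[OF \<open>ph q \<noteq> 1\<close>] phinv[OF that] by simp
  qed
  have eq1: "(\<Sum>i\<in>S. Ws i *\<^sub>R f i) = (\<Sum>q\<in>Q. W q *\<^sub>R e q)"
  proof -
    have "(\<Sum>i\<in>S. Ws i *\<^sub>R f i) = x0 + (\<Sum>q\<in>Q2. W q *\<^sub>R e q)"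
      unfolding sumS using aux1 by (simp add: Ws_def f_def)
    also have "\<dots> = (\<Sum>q\<in>Q. W q *\<^sub>R e q)"
      unfolding x0_def QU by (rule sum.union_disjoint[symmetric]) (use finQ1 finQ2 QD in auto)
    finally show ?thesis .
  qed
  have eq2: "(\<Sum>i\<in>S. (s i * Ws i) *\<^sub>R f i) = (\<Sum>q\<in>Q. (tau q * W q) *\<^sub>R e q)"
  proof -
    have "(\<Sum>i\<in>S. (s i * Ws i) *\<^sub>R f i) = tau0 *\<^sub>R x0 + (\<Sum>q\<in>Q2. (tau q * W q) *\<^sub>R e q)"
      unfolding sumS using aux2 by (simp add: Ws_def f_def s_def)
    also have "tau0 *\<^sub>R x0 = (\<Sum>q\<in>Q1. (tau q * W q) *\<^sub>R e q)"
      unfolding x0_def scaleR_sum_right using head by (intro sum.cong) (auto simp: Q1_def)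
    also have "(\<Sum>q\<in>Q1. (tau q * W q) *\<^sub>R e q) + (\<Sum>q\<in>Q2. (tau q * W q) *\<^sub>R e q) = (\<Sum>q\<in>Q. (tau q * W q) *\<^sub>R e q)"
      unfolding QU by (rule sum.union_disjoint[symmetric]) (use finQ1 finQ2 QD in auto)
    finally show ?thesis .
  qed
  show ?thesis using main eq1 eq2 by simp
qed

end



context L5 begin

definition rr where "rr q = (if \<exists>i. 1 \<le> i \<and> i \<le> d \<and> q \<le> P i then LEAST i. 1 \<le> i \<and> i \<le> d \<and> q \<le> P i else d)"

lemma rr_ex: "(\<exists>i. 1 \<le> i \<and> i \<le> d \<and> q \<le> P i) \<Longrightarrow> rr q = (LEAST i. 1 \<le> i \<and> i \<le> d \<and> q \<le> P i)"
  unfolding rr_def by (rule if_P)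

lemma rr_nex: "\<not> (\<exists>i. 1 \<le> i \<and> i \<le> d \<and> q \<le> P i) \<Longrightarrow> rr q = d"
  unfolding rr_def by (rule if_not_P)

lemma rr_range: "1 \<le> rr q \<and> rr q \<le> d"
proof (cases "\<exists>i. 1 \<le> i \<and> i \<le> d \<and> q \<le> P i")
  case True
  then have "1 \<le> (LEAST i. 1 \<le> i \<and> i \<le> d \<and> q \<le> P i) \<and> (LEAST i. 1 \<le> i \<and> i \<le> d \<and> q \<le> P i) \<le> d"
    by (metis (mono_tags, lifting) LeastI)
  then show ?thesis using rr_ex[OF True] by simp
next
  case False then show ?thesis using d_ge2 rr_nex[OF False] by simp
qed

lemma rr_below: "1 \<le> i \<Longrightarrow> i < rr q \<Longrightarrow> P i < q"
proof (cases "\<exists>i. 1 \<le> i \<and> i \<le> d \<and> q \<le> P i")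
  case True
  assume i: "1 \<le> i" "i < rr q"
  then have "i < (LEAST i. 1 \<le> i \<and> i \<le> d \<and> q \<le> P i)" using rr_ex[OF True] by simp
  then have "\<not> (1 \<le> i \<and> i \<le> d \<and> q \<le> P i)" by (rule not_less_Least)
  moreover have "i \<le> d" using i rr_range[of q] by simp
  ultimately show ?thesis using i by simp
next
  case False
  assume i: "1 \<le> i" "i < rr q"
  moreover have "i \<le> d" using i rr_range[of q] by simp
  ultimately show ?thesis using False by auto
qed

lemma rr_above: "rr q < d \<Longrightarrow> q \<le> P (rr q)"
proof (cases "\<exists>i. 1 \<le> i \<and> i \<le> d \<and> q \<le> P i")
  case True
  then have "q \<le> P (LEAST i. 1 \<le> i \<and> i \<le> d \<and> q \<le> P i)" by (metis (mono_tags, lifting) LeastI)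
  then show ?thesis using rr_ex[OF True] by simp
next
  case False
  assume "rr q < d" then show ?thesis using rr_nex[OF False] by simp
qed

lemma rr_mono: "q \<le> q' \<Longrightarrow> rr q \<le> rr q'"
proof (rule ccontr)
  assume qq: "q \<le> q'" and "\<not> rr q \<le> rr q'"
  then have lt: "rr q' < rr q" by simp
  then have "P (rr q') < q" using rr_below rr_range by blast
  moreover have "rr q' < d" using lt rr_range[of q] by simp
  then have "q' \<le> P (rr q')" by (rule rr_above)
  ultimately show False using qq by simp
qed

lemma rr_head: "q \<le> m 1 \<Longrightarrow> rr q = 1"
proof (rule ccontr)
  assume q: "q \<le> m 1" and "rr q \<noteq> 1"
  then have "1 < rr q" using rr_range[of q] by simp
  then have "P 1 < q" using rr_below by simp
  then show False using q P1 by simp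
qed

lemma rr_mid: "2 \<le> i \<Longrightarrow> i \<le> d - 1 \<Longrightarrow> rr (P i) = i"
proof -
  assume i: "2 \<le> i" "i \<le> d - 1"
  show ?thesis
  proof (rule ccontr)
    assume ne: "rr (P i) \<noteq> i"
    show False
    proof (cases "i < rr (P i)")
      case True
      then have "P i < P i" using rr_below[of i "P i"] i by simp
      then show False by simp
    next
      case False
      then have lt: "rr (P i) < i" using ne by simp
      then have "rr (P i) < d" using i by simp
      then have "P i \<le> P (rr (P i))" by (rule rr_above)
      moreover have "P (rr (P i)) < P i" using Pstrict[OF _ lt i(2)] rr_range by simp
      ultimately show False by simp
    qed
  qed
qed

lemma rr_tail: "P d < q \<Longrightarrow> rr q = d"
proof (rule ccontr)
  assume q: "P d < q" and "rr q \<noteq> d"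
  then have "rr q < d" using rr_range[of q] by simp
  then have "q \<le> P (rr q)" by (rule rr_above)
  moreover have "P (rr q) \<le> P d" using Pmono rr_range by simp
  ultimately show False using q by simp
qed

lemma KC: "IN q \<Longrightarrow> i \<in> {1..d} \<Longrightarrow> blinfun_apply (ff i) (e q) \<noteq> 0 \<Longrightarrow> rr q = i"
proof -
  assume q: "IN q" and i: "i \<in> {1..d}" and nz: "blinfun_apply (ff i) (e q) \<noteq> 0"
  have d1: "1 \<noteq> d" using d_ge2 by simp
  consider "i = 1" | "i = d" | "i \<noteq> 1" "i \<noteq> d" by blast
  then show ?thesis
  proof cases
    case 1
    then have "blinfun_apply xstar (e q) \<noteq> 0" using nz ff_eval[OF i q] by simp
    then have "q \<le> m 1" using xstar_van[OF q] by (meson not_le)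
    then show ?thesis using rr_head 1 by simp
  next
    case 2
    then have "blinfun_apply ystar (e q) \<noteq> 0" using nz ff_eval[OF i q] d1 by simp
    then have "m n < q" using ystar_van q by (meson atLeastAtMost_iff not_le)
    then show ?thesis using rr_tail Pd 2 by simp
  next
    case 3
    then have "m i = q" using nz ff_eval[OF i q] by (auto split: if_splits)
    moreover have "2 \<le> i" "i \<le> d - 1" using 3 i by auto
    ultimately show ?thesis using rr_mid Pmid by auto
  qed
qed

lemma KK: "IN q \<Longrightarrow> 2 \<le> i \<Longrightarrow> i \<le> d - 1 \<Longrightarrow> blinfun_apply (ff i) (e q) \<noteq> 0 \<Longrightarrow> q = P i"
proof -
  assume q: "IN q" and i: "2 \<le> i" "i \<le> d - 1" and nz: "blinfun_apply (ff i) (e q) \<noteq> 0"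
  have "i \<in> {1..d}" "i \<noteq> 1" "i \<noteq> d" using i by auto
  then have "m i = q" using nz ff_eval[of i q] q by (auto split: if_splits)
  then show ?thesis using Pmid i by simp
qed

lemma core:
  fixes g :: "'a \<Rightarrow>\<^sub>L real" and K :: "nat set" and sg :: "nat \<Rightarrow> real"
  assumes g: "g \<in> span (set fsl)" and K: "K \<subseteq> {2..d-1}"
    and sg1: "\<forall>i\<in>{1..d}. sg i = 1 \<or> sg i = -1"
    and run: "\<forall>i\<in>{1..d}. \<forall>i'\<in>{1..d}. i < i' \<and> sg i \<noteq> sg i' \<longrightarrow> (\<exists>k\<in>K. i \<le> k \<and> k < i')"
  shows "\<exists>g'. g' \<in> span (set fsl) \<and> norm g' \<le> lam * norm g \<and>
     (\<forall>i\<in>{1..d}. i \<notin> K \<longrightarrow> blinfun_apply g' (u i) = sg i * blinfun_apply g (u i))"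
proof -
  define c where "c i = blinfun_apply g (u i)" for i
  define h where "h = (\<Sum>i=1..d. (if i \<in> K then 0 else sg i * c i) *\<^sub>R ff i)"
  define tau where "tau q = sg (rr q)" for q
  define V where "V = span (e ` {k. IN k})"
  define C where "C = lam * norm g"
  have C0: "0 \<le> C" using lam_ge1 by (simp add: C_def)
  have gexp: "g = (\<Sum>i=1..d. c i *\<^sub>R ff i)" using fs_props(4)[OF g] by (simp add: c_def)
  have finK: "finite K" using K finite_subset by blast
  have Kmid: "2 \<le> k \<and> k \<le> d - 1" if "k \<in> K" for k using K that by auto
  have Kin: "k \<in> {1..d}" if "k \<in> K" for k using Kmid[OF that] by auto
  have Hb: "\<forall>v\<in>V. (\<forall>k\<in>K. blinfun_apply (ff k) v = 0) \<longrightarrow> \<bar>blinfun_apply h v\<bar> \<le> C * norm v"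
  proof (intro ballI impI)
    fix z assume z: "z \<in> V" and zK: "\<forall>k\<in>K. blinfun_apply (ff k) z = 0"
    obtain t r where t: "finite t" "t \<subseteq> e ` {k. IN k}" "z = (\<Sum>a\<in>t. r a *\<^sub>R a)"
      using z unfolding V_def real_vector.span_explicit by blast
    obtain T where T: "T \<subseteq> {k. IN k}" "finite T" "t = e ` T"
      using finite_subset_image[OF t(1) t(2)] by blast
    have injT: "inj_on e T" using e_inj T(1) inj_on_subset by blast
    define W where "W q = r (e q)" for q
    have z1: "z = (\<Sum>q\<in>T. W q *\<^sub>R e q)"
      using t(3) T(3) sum.reindex[OF injT, of "\<lambda>a. r a *\<^sub>R a"] by (simp add: W_def comp_def)
    define Q where "Q = {q\<in>T. W q \<noteq> 0}"
    have finQ: "finite Q" using T(2) by (simp add: Q_def)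
    have QIN: "\<forall>q\<in>Q. IN q" using T(1) by (auto simp: Q_def)
    have zQ: "z = (\<Sum>q\<in>Q. W q *\<^sub>R e q)"
    proof -
      have "(\<Sum>q\<in>T. W q *\<^sub>R e q) = (\<Sum>q\<in>Q. W q *\<^sub>R e q)"
        by (rule sum.mono_neutral_right) (auto simp: Q_def T(2))
      then show ?thesis using z1 by simp
    qed
    have eval: "blinfun_apply phi z = (\<Sum>q\<in>Q. W q * blinfun_apply phi (e q))" for phi :: "'a \<Rightarrow>\<^sub>L real"
      unfolding zQ by (simp add: blinfun.sum_right blinfun.scaleR_right)
    have PK: "P k \<notin> Q" if k: "k \<in> K" for k
    proof
      assume PQ: "P k \<in> Q"
      have km: "2 \<le> k" "k \<le> d - 1" using Kmid[OF k] by auto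
      have Pk: "P k = m k" using Pmid km by simp
      have ffk: "ff k = estar (m k)" using ffmid km by simp
      have kn: "k < n" using mid_n km by simp
      have INk: "IN (m k)" using m_IN[of k] kn km by simp
      have "blinfun_apply (ff k) z = (\<Sum>q\<in>Q. W q * (if m k = q then 1 else 0))"
        unfolding eval ffk by (rule sum.cong) (use QIN bo INk in auto)
      also have "\<dots> = (\<Sum>q\<in>Q. if m k = q then W q else 0)" by (rule sum.cong) auto
      also have "\<dots> = W (m k)" using PQ Pk finQ by (simp add: sum.delta)
      finally have "W (m k) = 0" using zK k by simp
      then show False using PQ Pk by (simp add: Q_def)
    qed
    define Tz where "Tz = (\<Sum>q\<in>Q. (tau q * W q) *\<^sub>R e q)"
    have evalT: "blinfun_apply phi Tz = (\<Sum>q\<in>Q. (tau q * W q) * blinfun_apply phi (e q))" for phi :: "'a \<Rightarrow>\<^sub>L real"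
      unfolding Tz_def by (simp add: blinfun.sum_right blinfun.scaleR_right)
    have fi: "blinfun_apply (ff i) Tz = (if i \<in> K then 0 else sg i * blinfun_apply (ff i) z)" if i: "i \<in> {1..d}" for i
    proof (cases "i \<in> K")
      case True
      have "blinfun_apply (ff i) (e q) = 0" if "q \<in> Q" for q
      proof (rule ccontr)
        assume "blinfun_apply (ff i) (e q) \<noteq> 0"
        then have "q = P i" using KK[of q i] QIN that Kmid[OF True] by auto
        then show False using PK[OF True] that by simp
      qed
      then show ?thesis unfolding evalT using True by simp
    next
      case False
      have "(\<Sum>q\<in>Q. (tau q * W q) * blinfun_apply (ff i) (e q)) = (\<Sum>q\<in>Q. sg i * (W q * blinfun_apply (ff i) (e q)))"
      proof (rule sum.cong)
        fix q assume q: "q \<in> Q"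
        show "(tau q * W q) * blinfun_apply (ff i) (e q) = sg i * (W q * blinfun_apply (ff i) (e q))"
        proof (cases "blinfun_apply (ff i) (e q) = 0")
          case False
          then have "rr q = i" using KC[of q i] QIN q i by auto
          then show ?thesis by (simp add: tau_def)
        qed simp
      qed simp
      then show ?thesis unfolding evalT eval using False by (simp add: sum_distrib_left)
    qed
    have hz: "blinfun_apply h z = blinfun_apply g Tz"
    proof -
      have "blinfun_apply g Tz = (\<Sum>i=1..d. c i * blinfun_apply (ff i) Tz)"
        by (subst gexp) (simp add: blinfun.sum_left blinfun.scaleR_left)
      also have "\<dots> = (\<Sum>i=1..d. (if i \<in> K then 0 else sg i * c i) * blinfun_apply (ff i) z)"
        by (rule sum.cong) (simp_all add: fi)
      also have "\<dots> = blinfun_apply h z"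
        unfolding h_def by (simp add: blinfun.sum_left blinfun.scaleR_left)
      finally show ?thesis by simp
    qed
    have Tnorm: "norm Tz \<le> lam * norm z"
    proof -
      have "norm (\<Sum>q\<in>Q. (tau q * W q) *\<^sub>R e q) \<le> lam * norm (\<Sum>q\<in>Q. W q *\<^sub>R e q)"
      proof (rule TB[of Q tau "sg 1" W, OF finQ QIN])
        show "\<forall>q\<in>Q. tau q = 1 \<or> tau q = -1" using sg1 rr_range by (auto simp: tau_def)
        show "sg 1 = 1 \<or> sg 1 = -1" using sg1 d_ge2 by auto
        show "\<forall>q\<in>Q. q \<le> m 1 \<longrightarrow> tau q = sg 1" using rr_head by (simp add: tau_def)
        show "\<forall>q q'. (q \<in> Q \<or> q = m 1) \<longrightarrow> q' \<in> Q \<longrightarrow> m 1 \<le> q \<longrightarrow> q < q' \<longrightarrow>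
           (if q = m 1 then sg 1 else tau q) \<noteq> tau q' \<longrightarrow> (\<exists>k. m 1 < k \<and> q < k \<and> k < q' \<and> k \<notin> Q)"
        proof (intro allI impI)
          fix q q' assume qQ: "q \<in> Q \<or> q = m 1" and q'Q: "q' \<in> Q" and mq: "m 1 \<le> q" and qq: "q < q'"
            and ne0: "(if q = m 1 then sg 1 else tau q) \<noteq> tau q'"
          have "(if q = m 1 then sg 1 else tau q) = sg (rr q)" using rr_head[of "m 1"] by (simp add: tau_def)
          then have ne: "sg (rr q) \<noteq> sg (rr q')" using ne0 by (simp add: tau_def)
          have le: "rr q \<le> rr q'" using rr_mono qq by simp
          then have lt: "rr q < rr q'" using ne by (cases "rr q = rr q'") auto
          obtain k where k: "k \<in> K" "rr q \<le> k" "k < rr q'"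
            using run[rule_format, of "rr q" "rr q'"] rr_range lt ne by auto
          have km: "2 \<le> k" "k \<le> d - 1" using Kmid[OF k(1)] by auto
          show "\<exists>k. m 1 < k \<and> q < k \<and> k < q' \<and> k \<notin> Q"
          proof (intro exI conjI)
            show "m 1 < P k" using Pmid_gt km by simp
            show "P k < q'" using rr_below[of k q'] k km by simp
            show "P k \<notin> Q" using PK[OF k(1)] .
            have "rr q < d" using lt rr_range[of q'] by simp
            then have "q \<le> P (rr q)" by (rule rr_above)
            also have "P (rr q) \<le> P k" using Pmono rr_range k km by simp
            finally have "q \<le> P k" .
            moreover have "q \<noteq> P k" using qQ PK[OF k(1)] Pmid_gt[OF km] by auto
            ultimately show "q < P k" by simp
          qed
        qed
      qed
      then show ?thesis using zQ by (simp add: Tz_def)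
    qed
    have "\<bar>blinfun_apply h z\<bar> = norm (blinfun_apply g Tz)" using hz by simp
    also have "\<dots> \<le> norm g * norm Tz" by (rule norm_blinfun)
    also have "\<dots> \<le> norm g * (lam * norm z)" using Tnorm by (simp add: mult_left_mono)
    finally show "\<bar>blinfun_apply h z\<bar> \<le> C * norm z" by (simp add: C_def algebra_simps)
  qed
  obtain cc where cc: "\<forall>v\<in>V. \<bar>blinfun_apply h v + (\<Sum>k\<in>K. cc k * blinfun_apply (ff k) v)\<bar> \<le> C * norm v"
  proof -
    have "\<exists>cc. \<forall>v\<in>V. \<bar>blinfun_apply h v + (\<Sum>k\<in>K. cc k * blinfun_apply (ff k) v)\<bar> \<le> C * norm v"
    proof (rule hb_multi[where l = ff and w = u, OF _ C0 finK])
      show "subspace V" by (simp add: V_def)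
      show "\<forall>k\<in>K. u k \<in> V"
      proof
        fix k assume "k \<in> K"
        then have "k \<in> {1..d}" using Kmid by force
        then show "u k \<in> V" using u_fin by (simp add: V_def)
      qed
      show "\<forall>k\<in>K. \<forall>k'\<in>K. blinfun_apply (ff k) (u k') = (if k = k' then 1 else 0)"
        using ff_u[OF Kin Kin] by auto
    qed (rule Hb)
    then show ?thesis using that by blast
  qed
  define g' where "g' = h + (\<Sum>k\<in>K. cc k *\<^sub>R ff k)"
  have g'apply: "blinfun_apply g' v = blinfun_apply h v + (\<Sum>k\<in>K. cc k * blinfun_apply (ff k) v)" for v
    by (simp add: g'_def blinfun.add_left blinfun.sum_left blinfun.scaleR_left)
  have g'V: "\<bar>blinfun_apply g' v\<bar> \<le> C * norm v" if "v \<in> V" for v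
    using cc that g'apply by simp
  have g'all: "\<bar>blinfun_apply g' x\<bar> \<le> C * norm x" for x
  proof -
    obtain s where s: "\<And>M. s M \<in> V" "s \<longlonglongrightarrow> x" using density unfolding V_def by blast
    have l1: "(\<lambda>M. \<bar>blinfun_apply g' (s M)\<bar>) \<longlonglongrightarrow> \<bar>blinfun_apply g' x\<bar>"
      by (intro tendsto_rabs blinfun.tendsto[OF tendsto_const s(2)])
    have l2: "(\<lambda>M. C * norm (s M)) \<longlonglongrightarrow> C * norm x"
      by (intro tendsto_mult tendsto_const tendsto_norm s(2))
    show ?thesis
      by (rule tendsto_le[OF trivial_limit_sequentially l2 l1]) (use g'V s(1) in auto)
  qed
  have ng': "norm g' \<le> C"
    by (rule norm_blinfun_bound[OF C0]) (use g'all in auto)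
  have hspan: "h \<in> span (set fsl)"
    unfolding h_def by (intro span_sum span_scale span_base) (use ff_in in auto)
  have g'span: "g' \<in> span (set fsl)"
    unfolding g'_def by (intro span_add hspan span_sum span_scale span_base) (use ff_in Kin in auto)
  have g'u: "blinfun_apply g' (u i) = sg i * blinfun_apply g (u i)" if i: "i \<in> {1..d}" "i \<notin> K" for i
  proof -
    have "(\<Sum>k\<in>K. cc k * blinfun_apply (ff k) (u i)) = 0"
      by (rule sum.neutral) (use ff_u[OF Kin i(1)] i in auto)
    moreover have "blinfun_apply h (u i) = sg i * c i"
    proof -
      have "blinfun_apply h (u i) = (\<Sum>i'=1..d. (if i' \<in> K then 0 else sg i' * c i') * blinfun_apply (ff i') (u i))"
        unfolding h_def by (simp add: blinfun.sum_left blinfun.scaleR_left)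
      also have "\<dots> = (\<Sum>i'=1..d. (if i' \<in> K then 0 else sg i' * c i') * (if i' = i then 1 else 0))"
      proof (rule sum.cong[OF refl])
        fix x assume "x \<in> {1..d}"
        then show "(if x \<in> K then 0 else sg x * c x) * blinfun_apply (ff x) (u i) = (if x \<in> K then 0 else sg x * c x) * (if x = i then 1 else 0)"
          using ff_u[OF _ i(1), of x] by simp
      qed
      also have "\<dots> = (\<Sum>i'=1..d. if i' = i then sg i * c i else 0)"
        by (rule sum.cong[OF refl]) (use i in auto)
      also have "\<dots> = sg i * c i" using i by (simp add: sum.delta)
      finally show ?thesis .
    qed
    ultimately show ?thesis using g'apply by (simp add: c_def)
  qed
  show ?thesis using g'span ng' g'u by (auto simp: C_def)
qed

end



context L5 begin

lemma final: "dual_skipped_unconditional_basis lam fsl"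
  unfolding dual_skipped_unconditional_basis_def
proof (intro conjI allI impI)
  show "distinct fsl" by (rule fs_props(1))
  show "\<not> real_vector.dependent (set fsl)" by (rule fs_props(2))
  fix n' :: nat and p :: "nat \<Rightarrow> nat" and a eps :: "nat \<Rightarrow> real"
  assume prem: "p 0 = 0 \<and> (\<forall>j\<in>{1..n'}. p (j - 1) + 2 \<le> p j) \<and> (\<forall>j\<in>{1..n'}. eps j = 1 \<or> eps j = - 1)"
  then have gp: "\<forall>j\<in>{1..n'}. p (j - 1) + 2 \<le> p j" and eps1: "\<forall>j\<in>{1..n'}. eps j = 1 \<or> eps j = - 1" and p0: "p 0 = 0"
    by auto
  define F where "F = span (set fsl)"
  define Bl where "Bl j = {i. p (j - 1) < i \<and> i < p j \<and> i \<le> length fsl}" for j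
  define y where "y j g = (\<Sum>i\<in>Bl j. a i * dual_functional fsl i g)" for j g
  define Phi1 where "Phi1 g = (\<Sum>j=1..n'. y j g)" for g
  define Phie where "Phie g = (\<Sum>j=1..n'. eps j * y j g)" for g
  have lenfs: "length fsl = d" by (simp add: d_def)
  have Bld: "i \<in> {1..d}" if "i \<in> Bl j" for i j using that by (auto simp: Bl_def lenfs)
  have finBl: "finite (Bl j)" for j by (simp add: Bl_def)
  have yF: "y j g = (\<Sum>i\<in>Bl j. a i * blinfun_apply g (u i))" if "g \<in> F" for j g
    unfolding y_def by (rule sum.cong[OF refl]) (use fs_props(3) that Bld in \<open>auto simp: F_def\<close>)
  define B where "B = (\<Sum>j=1..n'. \<Sum>i\<in>Bl j. \<bar>a i\<bar> * norm (u i))"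
  have Phi1_bd: "\<bar>Phi1 g\<bar> \<le> B" if "g \<in> F" "norm g \<le> 1" for g
  proof -
    have "\<bar>Phi1 g\<bar> \<le> (\<Sum>j=1..n'. \<bar>y j g\<bar>)" unfolding Phi1_def by (rule sum_abs)
    also have "\<dots> \<le> B" unfolding B_def
    proof (rule sum_mono)
      fix j
      have "\<bar>y j g\<bar> \<le> (\<Sum>i\<in>Bl j. \<bar>a i * blinfun_apply g (u i)\<bar>)" unfolding yF[OF that(1)] by (rule sum_abs)
      also have "\<dots> \<le> (\<Sum>i\<in>Bl j. \<bar>a i\<bar> * norm (u i))"
      proof (rule sum_mono)
        fix i
        have "\<bar>blinfun_apply g (u i)\<bar> \<le> norm g * norm (u i)" using norm_blinfun[of g "u i"] by simp
        also have "\<dots> \<le> norm (u i)" using that(2) by (simp add: mult_left_le_one_le)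
        finally show "\<bar>a i * blinfun_apply g (u i)\<bar> \<le> \<bar>a i\<bar> * norm (u i)"
          by (simp add: abs_mult mult_left_mono)
      qed
      finally show "\<bar>y j g\<bar> \<le> (\<Sum>i\<in>Bl j. \<bar>a i\<bar> * norm (u i))" .
    qed
    finally show ?thesis .
  qed
  define D where "D = dual_norm F Phi1"
  have setne: "{\<bar>Phi1 g\<bar> | g. g \<in> F \<and> norm g \<le> 1} \<noteq> {}" by (auto simp: F_def intro: span_zero)
  have bdd: "bdd_above {\<bar>Phi1 g\<bar> | g. g \<in> F \<and> norm g \<le> 1}"
    unfolding bdd_above_def using Phi1_bd by blast
  have leD: "\<bar>Phi1 g\<bar> \<le> D" if "g \<in> F" "norm g \<le> 1" for g
    unfolding D_def dual_norm_def by (rule cSup_upper[OF _ bdd]) (use that in auto)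
  define ex where "ex i \<longleftrightarrow> (\<exists>j. 1 \<le> j \<and> j \<le> n' \<and> i \<le> p j)" for i
  define J where "J i = (LEAST j. 1 \<le> j \<and> j \<le> n' \<and> i \<le> p j)" for i
  define sg where "sg i = (if ex i then eps (J i) else 1)" for i
  define K where "K = {k \<in> {2..d-1}. \<exists>j\<in>{1..n'}. p j = k}"
  have pmono: "p j \<le> p j'" if "j \<le> j'" "j' \<le> n'" for j j'
    using gaps_mono[OF gp that] by simp
  have pstrict: "p j + 2 \<le> p j'" if "j < j'" "j' \<le> n'" for j j'
    using gaps_mono'[OF gp that] by simp
  have Jprop: "1 \<le> J i \<and> J i \<le> n' \<and> i \<le> p (J i)" if "ex i" for i
    using that unfolding ex_def J_def by (metis (mono_tags, lifting) LeastI)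
  have Jleast: "J i \<le> j" if "1 \<le> j" "j \<le> n'" "i \<le> p j" for i j
    unfolding J_def by (rule Least_le) (use that in auto)
  have sg1: "\<forall>i\<in>{1..d}. sg i = 1 \<or> sg i = -1"
    using eps1 Jprop by (auto simp: sg_def)
  have run: "\<forall>i\<in>{1..d}. \<forall>i'\<in>{1..d}. i < i' \<and> sg i \<noteq> sg i' \<longrightarrow> (\<exists>k\<in>K. i \<le> k \<and> k < i')"
  proof (intro ballI impI)
    fix i i' assume i: "i \<in> {1..d}" and i': "i' \<in> {1..d}" and h: "i < i' \<and> sg i \<noteq> sg i'"
    have exi: "ex i"
    proof (rule ccontr)
      assume nex: "\<not> ex i"
      have "\<not> ex i'"
      proof
        assume "ex i'"
        then obtain j where "1 \<le> j" "j \<le> n'" "i' \<le> p j" unfolding ex_def by blast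
        then have "ex i" using h unfolding ex_def by (intro exI[of _ j]) simp
        then show False using nex by simp
      qed
      then show False using nex h by (simp add: sg_def)
    qed
    have gt: "p (J i) < i'"
    proof (rule ccontr)
      assume "\<not> p (J i) < i'"
      then have le: "i' \<le> p (J i)" by simp
      then have exi': "ex i'" using Jprop[OF exi] unfolding ex_def by blast
      have "J i' \<le> J i" using Jleast[of "J i" i'] Jprop[OF exi] le by simp
      moreover have "J i \<le> J i'" using Jleast[of "J i'" i] Jprop[OF exi'] h by simp
      ultimately have "J i = J i'" by simp
      then show False using h exi exi' by (simp add: sg_def)
    qed
    show "\<exists>k\<in>K. i \<le> k \<and> k < i'"
    proof (intro bexI conjI)
      show "i \<le> p (J i)" using Jprop[OF exi] by simp
      show "p (J i) < i'" by (rule gt)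
      have "p (J i - 1) + 2 \<le> p (J i)" using gp Jprop[OF exi] by auto
      then show "p (J i) \<in> K" using gt i' Jprop[OF exi] unfolding K_def by auto
    qed
  qed
  have Kd: "K \<subseteq> {2..d-1}" by (auto simp: K_def)
  have blk: "i \<notin> K \<and> sg i = eps j" if j: "j \<in> {1..n'}" and i: "i \<in> Bl j" for i j
  proof
    have i1: "p (j - 1) < i" "i < p j" using i by (auto simp: Bl_def)
    show "i \<notin> K"
    proof
      assume "i \<in> K"
      then obtain j' where j': "j' \<in> {1..n'}" "p j' = i" by (auto simp: K_def)
      show False
      proof (cases "j' < j")
        case True
        then have "p j' \<le> p (j - 1)" using pmono[of j' "j - 1"] j by simp
        then show False using i1 j' by simp
      next
        case False
        then have "p j \<le> p j'" using pmono[of j j'] j' by simp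
        then show False using i1 j' by simp
      qed
    qed
    have exi: "ex i" using j i1 unfolding ex_def by (intro exI[of _ j]) auto
    have "J i = j"
    proof (rule antisym)
      show "J i \<le> j" using Jleast j i1 by simp
      show "j \<le> J i"
      proof (rule ccontr)
        assume "\<not> j \<le> J i"
        then have "J i \<le> j - 1" by simp
        moreover have "j - 1 \<le> n'" using j by auto
        ultimately have "p (J i) \<le> p (j - 1)" using pmono[of "J i" "j - 1"] by blast
        then show False using Jprop[OF exi] i1 by simp
      qed
    qed
    then show "sg i = eps j" using exi by (simp add: sg_def)
  qed
  have Phie_bd: "\<bar>Phie g\<bar> \<le> lam * D" if g: "g \<in> F" "norm g \<le> 1" for g
  proof -
    obtain g' where g': "g' \<in> F" "norm g' \<le> lam * norm g"
      "\<forall>i\<in>{1..d}. i \<notin> K \<longrightarrow> blinfun_apply g' (u i) = sg i * blinfun_apply g (u i)"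
      using core[OF _ Kd sg1 run, of g] g(1) unfolding F_def by blast
    have "Phie g = Phi1 g'"
    proof -
      have "Phie g = (\<Sum>j=1..n'. \<Sum>i\<in>Bl j. a i * (eps j * blinfun_apply g (u i)))"
        unfolding Phie_def yF[OF g(1)] by (simp add: sum_distrib_left algebra_simps)
      also have "\<dots> = (\<Sum>j=1..n'. \<Sum>i\<in>Bl j. a i * blinfun_apply g' (u i))"
      proof (rule sum.cong[OF refl], rule sum.cong[OF refl])
        fix j i assume j: "j \<in> {1..n'}" and i: "i \<in> Bl j"
        show "a i * (eps j * blinfun_apply g (u i)) = a i * blinfun_apply g' (u i)"
          using blk[OF j i] g'(3) Bld[OF i] by simp
      qed
      also have "\<dots> = Phi1 g'" unfolding Phi1_def yF[OF g'(1)] by simp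
      finally show ?thesis .
    qed
    moreover have "\<bar>Phi1 g'\<bar> \<le> lam * D"
    proof -
      have lam0: "0 < lam" using lam_ge1 by simp
      define g'' where "g'' = (1 / lam) *\<^sub>R g'"
      have g''F: "g'' \<in> F" unfolding g''_def F_def using g'(1) by (simp add: F_def span_scale)
      have "norm g'' = norm g' / lam" using lam0 by (simp add: g''_def)
      also have "\<dots> \<le> lam * norm g / lam" using g'(2) lam0 by (intro divide_right_mono) auto
      also have "\<dots> \<le> 1" using g(2) lam0 by simp
      finally have ng'': "norm g'' \<le> 1" .
      have "Phi1 g'' = Phi1 g' / lam"
        unfolding Phi1_def yF[OF g''F] yF[OF g'(1)]
        by (simp add: g''_def blinfun.scaleR_left sum_divide_distrib)
      then have "\<bar>Phi1 g'\<bar> = lam * \<bar>Phi1 g''\<bar>" using lam0 by (simp add: abs_mult)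
      also have "\<dots> \<le> lam * D" using leD[OF g''F ng''] lam0 by simp
      finally show ?thesis .
    qed
    ultimately show ?thesis by simp
  qed
  have "dual_norm F Phie \<le> lam * D"
    unfolding dual_norm_def
  proof (rule cSup_least)
    show "{\<bar>Phie g\<bar> | g. g \<in> F \<and> norm g \<le> 1} \<noteq> {}" by (auto simp: F_def intro: span_zero)
    show "x \<le> lam * D" if "x \<in> {\<bar>Phie g\<bar> | g. g \<in> F \<and> norm g \<le> 1}" for x
      using that Phie_bd by auto
  qed
  then show "let y = (\<lambda>j g. \<Sum>i\<in>{i. p (j - 1) < i \<and> i < p j \<and> i \<le> length fsl}. a i * dual_functional fsl i g)
       in dual_norm (span (set fsl)) (\<lambda>g. \<Sum>j = 1..n'. eps j * y j g) \<le> lam * dual_norm (span (set fsl)) (\<lambda>g. \<Sum>j = 1..n'. y j g)"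
    unfolding Let_def D_def F_def Phie_def Phi1_def y_def Bl_def by simp
qed

end

theorem lemma5p1:
  fixes e :: "nat \<Rightarrow> 'a::banach"
    and estar :: "nat \<Rightarrow> ('a \<Rightarrow>\<^sub>L real)"
    and N :: enat and lam :: real
    and m :: "nat \<Rightarrow> nat" and n :: nat
    and xstar ystar :: "'a \<Rightarrow>\<^sub>L real"
  assumes basis: "schauder_basis N e"
    and biorth: "\<forall>j k. 1 \<le> j \<and> enat j \<le> N \<and> 1 \<le> k \<and> enat k \<le> N \<longrightarrow>
                   blinfun_apply (estar j) (e k) = (if j = k then 1 else 0)"
    and n_pos: "1 \<le> n"
    and m1: "1 \<le> m 1"
    and m_mono: "\<forall>j\<in>{1..<n}. m j < m (Suc j)"
    and mn: "enat (m n) < N"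
    and hyp: "\<forall>x\<in>span (e ` {1..m 1}).
               skipped_unconditional lam (\<lambda>i. if i = 1 then x else e (m 1 + i - 1))
                 (N - enat (m 1) + 1)"
    and xstar_nz: "xstar \<noteq> 0"
    and ystar_nz: "ystar \<noteq> 0"
    and xstar_span: "xstar \<in> span (estar ` {1..m 1})"
    and ystar_van: "\<forall>j\<in>{1..m n}. blinfun_apply ystar (e j) = 0"
  shows "dual_skipped_unconditional_basis lam
           ([xstar] @ map (\<lambda>j. estar (m j)) [2..<n] @ [ystar])"
proof -
  interpret L5 e estar N lam m n xstar ystar
    by (rule L5.intro) (fact basis biorth n_pos m1 m_mono mn hyp xstar_nz ystar_nz xstar_span ystar_van)+
  show ?thesis using final by (simp add: fsl_def)
qed

end
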